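(* Let $(\mathcal E,d)$ be a compact metric space, $k>1$, and $f_1,\dots,f_k$ homeomorphisms of $\mathcal E$ forming a compact contracting ping-pong (there are pairwise disjoint compact sets $A_1,B_1,\dots,A_k,B_k$ with $f_i(\mathcal E\setminus A_i)\subset B_i$, and the restrictions of $f_i$ to $\mathcal E\setminus A_i$ and of $f_i^{-1}$ to $\mathcal E\setminus B_i$ are contractions for $d$). Let $\Sigma$ be the set of bi-infinite reduced words $(g_i)_{i\in\mathbb Z}$ with letters $g_i\in\{f_j,f_j^{-1}:1\le j\le k\}$, with the product topology, $\sigma$ the shift $(\sigma(g))_i=g_{i+1}$, $\Delta=\Sigma\times\mathcal E$, and $\tilde\sigma:\Delta\to\Delta$, $\tilde\sigma((g_i),x)=(\sigma((g_i)),g_0(x))$. Then there are exactly two continuous $\tilde\sigma$-invariant sections $s^+,s^-:\Sigma\to\Delta$; they are disjoint; $s^+(\Sigma)$ is a topological attractor for $\tilde\sigma$ whose basin is $\Delta\setminus s^-(\Sigma)$, and $s^-(\Sigma)$ is a topological repellor for $\tilde\sigma$ whose basin (for $\tilde\sigma^{-1}$) is $\Delta\setminus s^+(\Sigma)$.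
   Context: A bi-infinite word $(g_i)_{i\in\mathbb Z}$ is reduced if $g_{i+1}\neq g_i^{-1}$ for all $i$. A section $s$ of $\Delta\to\Sigma$ is $\tilde\sigma$-invariant if $\tilde\sigma(s(\Sigma))=s(\Sigma)$, i.e. $s(\sigma(g))=(\sigma(g),g_0(x))$ when $s(g)=(g,x)$. A map is a contraction for $d$ on a set if it strictly decreases distances between distinct points of that set. *)

theory Defs
  imports "HOL-Analysis.Analysis"
begin

text \<open>Letters: (j, True) stands for f_j, (j, False) for f_j^{-1}, with j < k (0-based).\<close>
type_synonym letter = "nat \<times> bool"

definition letter_inv :: "letter \<Rightarrow> letter" where
  "letter_inv l = (fst l, \<not> snd l)"

definition letter_act :: "(nat \<Rightarrow> 'a \<Rightarrow> 'a) \<Rightarrow> (nat \<Rightarrow> 'a \<Rightarrow> 'a) \<Rightarrow> letter \<Rightarrow> 'a \<Rightarrow> 'a" where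
  "letter_act f finv l = (if snd l then f (fst l) else finv (fst l))"

definition Sigma_words :: "nat \<Rightarrow> (int \<Rightarrow> letter) set" where
  "Sigma_words k = {g. (\<forall>i. fst (g i) < k) \<and> (\<forall>i. g (i + 1) \<noteq> letter_inv (g i))}"

definition Sigma_top :: "nat \<Rightarrow> (int \<Rightarrow> letter) topology" where
  "Sigma_top k = subtopology (product_topology (\<lambda>_. discrete_topology UNIV) UNIV) (Sigma_words k)"

definition Delta_top :: "nat \<Rightarrow> ((int \<Rightarrow> letter) \<times> 'a::topological_space) topology" where
  "Delta_top k = prod_topology (Sigma_top k) euclidean"

definition shift :: "(int \<Rightarrow> letter) \<Rightarrow> (int \<Rightarrow> letter)" where
  "shift g = (\<lambda>i. g (i + 1))"

definition skew :: "(nat \<Rightarrow> 'a \<Rightarrow> 'a) \<Rightarrow> (nat \<Rightarrow> 'a \<Rightarrow> 'a) \<Rightarrow>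
    (int \<Rightarrow> letter) \<times> 'a \<Rightarrow> (int \<Rightarrow> letter) \<times> 'a" where
  "skew f finv p = (shift (fst p), letter_act f finv (fst p 0) (snd p))"

definition contraction_on :: "('a::metric_space \<Rightarrow> 'a) \<Rightarrow> 'a set \<Rightarrow> bool" where
  "contraction_on h S \<longleftrightarrow> (\<forall>x\<in>S. \<forall>y\<in>S. x \<noteq> y \<longrightarrow> dist (h x) (h y) < dist x y)"

definition compact_contracting_ping_pong ::
  "nat \<Rightarrow> (nat \<Rightarrow> 'a::metric_space \<Rightarrow> 'a) \<Rightarrow> (nat \<Rightarrow> 'a \<Rightarrow> 'a) \<Rightarrow> bool" where
  "compact_contracting_ping_pong k f finv \<longleftrightarrow>
     (\<exists>A B :: nat \<Rightarrow> 'a set.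
        (\<forall>i<k. compact (A i) \<and> compact (B i)) \<and>
        (\<forall>i<k. \<forall>j<k. A i \<inter> B j = {}) \<and>
        (\<forall>i<k. \<forall>j<k. i \<noteq> j \<longrightarrow> A i \<inter> A j = {} \<and> B i \<inter> B j = {}) \<and>
        (\<forall>i<k. f i ` (UNIV - A i) \<subseteq> B i) \<and>
        (\<forall>i<k. contraction_on (f i) (UNIV - A i)) \<and>
        (\<forall>i<k. contraction_on (finv i) (UNIV - B i)))"

definition continuous_section :: "nat \<Rightarrow> ((int \<Rightarrow> letter) \<Rightarrow> (int \<Rightarrow> letter) \<times> 'a::topological_space) \<Rightarrow> bool" where
  "continuous_section k s \<longleftrightarrow>
     continuous_map (Sigma_top k) (Delta_top k) s \<and> (\<forall>g\<in>Sigma_words k. fst (s g) = g)"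

definition skew_invariant_section ::
  "nat \<Rightarrow> (nat \<Rightarrow> 'a \<Rightarrow> 'a) \<Rightarrow> (nat \<Rightarrow> 'a \<Rightarrow> 'a) \<Rightarrow> ((int \<Rightarrow> letter) \<Rightarrow> (int \<Rightarrow> letter) \<times> 'a) \<Rightarrow> bool" where
  "skew_invariant_section k f finv s \<longleftrightarrow>
     skew f finv ` (s ` Sigma_words k) = s ` Sigma_words k"

definition basin :: "'b topology \<Rightarrow> ('b \<Rightarrow> 'b) \<Rightarrow> 'b set \<Rightarrow> 'b set" where
  "basin X T K = {x \<in> topspace X. \<forall>V. openin X V \<and> K \<subseteq> V \<longrightarrow>
       eventually (\<lambda>n. (T ^^ n) x \<in> V) sequentially}"

text \<open>Topological attractor (Conley): compact invariant set which is the omega-limit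
  of a trapping open neighbourhood.\<close>
definition topological_attractor :: "'b topology \<Rightarrow> ('b \<Rightarrow> 'b) \<Rightarrow> 'b set \<Rightarrow> bool" where
  "topological_attractor X T K \<longleftrightarrow>
     compactin X K \<and> T ` K = K \<and>
     (\<exists>U. openin X U \<and> K \<subseteq> U \<and> T ` (X closure_of U) \<subseteq> U \<and> K = (\<Inter>n. (T ^^ n) ` U))"

definition topological_repellor :: "'b topology \<Rightarrow> ('b \<Rightarrow> 'b) \<Rightarrow> 'b set \<Rightarrow> bool" where
  "topological_repellor X T K \<longleftrightarrow> topological_attractor X (inv_into (topspace X) T) K"

end

theory Submission
  imports Defs
begin

locale pp =
  fixes k :: nat and f finv :: "nat \<Rightarrow> 'a::metric_space \<Rightarrow> 'a" and A B :: "nat \<Rightarrow> 'a set"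
  assumes cpt: "compact (UNIV::'a set)" and k1: "k > 1"
  and homeo: "\<forall>i<k. homeomorphism UNIV UNIV (f i) (finv i)"
  and cAB: "\<forall>i<k. compact (A i) \<and> compact (B i)"
  and dAB: "\<forall>i<k. \<forall>j<k. A i \<inter> B j = {}"
  and dAA: "\<forall>i<k. \<forall>j<k. i \<noteq> j \<longrightarrow> A i \<inter> A j = {} \<and> B i \<inter> B j = {}"
  and fAB: "\<forall>i<k. f i ` (UNIV - A i) \<subseteq> B i"
  and cf: "\<forall>i<k. contraction_on (f i) (UNIV - A i)"
  and cfinv: "\<forall>i<k. contraction_on (finv i) (UNIV - B i)"
begin

definition act :: "letter \<Rightarrow> 'a \<Rightarrow> 'a" where "act = letter_act f finv"
definition Img :: "letter \<Rightarrow> 'a set" where "Img l = (if snd l then B (fst l) else A (fst l))"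
definition Dom :: "letter \<Rightarrow> 'a set" where "Dom l = UNIV - Img (letter_inv l)"
abbreviation "Sig \<equiv> Sigma_words k"

lemma linv_linv[simp]: "letter_inv (letter_inv l) = l"
  by (simp add: letter_inv_def)
lemma linv_fst[simp]: "fst (letter_inv l) = fst l"
  by (simp add: letter_inv_def)
lemma linv_eq_iff: "letter_inv a = b \<longleftrightarrow> a = letter_inv b"
  by (auto simp: letter_inv_def)

lemma act_inv1: "fst l < k \<Longrightarrow> act (letter_inv l) (act l x) = x"
  using homeo unfolding act_def letter_act_def letter_inv_def homeomorphism_def by auto
lemma act_inv2: "fst l < k \<Longrightarrow> act l (act (letter_inv l) x) = x"
  using act_inv1[of "letter_inv l"] by simp
lemma act_inj: "fst l < k \<Longrightarrow> act l x = act l y \<Longrightarrow> x = y"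
  by (metis act_inv1)
lemma act_cont: "fst l < k \<Longrightarrow> continuous_on UNIV (act l)"
  using homeo unfolding act_def letter_act_def homeomorphism_def by auto

lemma Img_compact: "fst l < k \<Longrightarrow> compact (Img l)"
  using cAB by (simp add: Img_def)

lemma Img_disj: "fst l < k \<Longrightarrow> fst l' < k \<Longrightarrow> l \<noteq> l' \<Longrightarrow> Img l \<inter> Img l' = {}"
proof -
  assume l: "fst l < k" "fst l' < k" "l \<noteq> l'"
  obtain i b j c where lb: "l = (i,b)" "l' = (j,c)" by force
  have ij: "i < k" "j < k" using l lb by auto
  show ?thesis
  proof (cases b; cases c)
    assume "b" "c" thus ?thesis using dAA ij l lb by (auto simp: Img_def)
  next
    assume "b" "\<not>c" thus ?thesis using dAB ij lb by (auto simp: Img_def)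
  next
    assume "\<not>b" "c" thus ?thesis using dAB ij lb by (auto simp: Img_def)
  next
    assume "\<not>b" "\<not>c" thus ?thesis using dAA ij l lb by (auto simp: Img_def)
  qed
qed

lemma act_Dom: "fst l < k \<Longrightarrow> x \<in> Dom l \<Longrightarrow> act l x \<in> Img l"
proof -
  assume l: "fst l < k" and x: "x \<in> Dom l"
  obtain i b where lb: "l = (i,b)" by force
  show ?thesis
  proof (cases b)
    case True thus ?thesis using fAB l x lb by (auto simp: Dom_def Img_def act_def letter_act_def letter_inv_def)
  next
    case False
    have "finv i x \<in> A i"
    proof (rule ccontr)
      assume "finv i x \<notin> A i"
      hence "f i (finv i x) \<in> B i" using fAB l lb by auto
      moreover have "f i (finv i x) = x" using homeo l lb unfolding homeomorphism_def by auto
      ultimately show False using x lb False by (auto simp: Dom_def Img_def letter_inv_def)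
    qed
    thus ?thesis using lb False by (auto simp: Img_def act_def letter_act_def)
  qed
qed

lemma act_contr: "fst l < k \<Longrightarrow> x \<in> Dom l \<Longrightarrow> y \<in> Dom l \<Longrightarrow> x \<noteq> y \<Longrightarrow> dist (act l x) (act l y) < dist x y"
proof -
  assume l: "fst l < k" and xy: "x \<in> Dom l" "y \<in> Dom l" "x \<noteq> y"
  obtain i b where lb: "l = (i,b)" by force
  show ?thesis
  proof (cases b)
    case True
    have "contraction_on (f i) (UNIV - A i)" using cf l lb by simp
    thus ?thesis using xy lb True unfolding contraction_on_def Dom_def Img_def act_def letter_act_def letter_inv_def
      by simp
  next
    case False
    have "contraction_on (finv i) (UNIV - B i)" using cfinv l lb by simp
    thus ?thesis using xy lb False unfolding contraction_on_def Dom_def Img_def act_def letter_act_def letter_inv_def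
      by simp
  qed
qed

lemma act_contr_le: "fst l < k \<Longrightarrow> x \<in> Dom l \<Longrightarrow> y \<in> Dom l \<Longrightarrow> dist (act l x) (act l y) \<le> dist x y"
  by (cases "x = y") (auto dest: act_contr[of l x y])

lemma Img_ne: "fst l < k \<Longrightarrow> Img l \<noteq> {}"
proof
  assume l: "fst l < k" and e: "Img l = {}"
  obtain i b where lb: "l = (i,b)" by force
  define j where "j = (if i = 0 then 1 else (0::nat))"
  have j: "j < k" "j \<noteq> i" using k1 by (auto simp: j_def)
  have il: "i < k" using l lb by simp
  show False
  proof (cases b)
    case True
    hence "B i = {}" using e lb by (simp add: Img_def)
    hence "A i = UNIV" using fAB il by auto
    hence "B j = {}" "A i \<inter> A j = {}" using dAB dAA il j by auto
    have "f j ` (UNIV - A j) = {}" using fAB j \<open>B j = {}\<close> by blast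
    hence "A j = UNIV" by auto
    thus False using \<open>A i = UNIV\<close> \<open>A i \<inter> A j = {}\<close> by auto
  next
    case False
    hence "A i = {}" using e lb by (simp add: Img_def)
    hence "f i ` UNIV \<subseteq> B i" using fAB il by auto
    moreover have "f i ` UNIV = UNIV" using homeo il unfolding homeomorphism_def by auto
    ultimately have "B i = UNIV" by auto
    hence "B j = {}" using dAA il j by auto
    have "f j ` (UNIV - A j) = {}" using fAB j \<open>B j = {}\<close> by blast
    hence "A j = UNIV" by auto
    thus False using \<open>B i = UNIV\<close> dAB il j by auto
  qed
qed

definition Kset :: "letter \<Rightarrow> 'a set" where
  "Kset l = \<Union>{Img l' | l'. fst l' < k \<and> l' \<noteq> letter_inv l}"

lemma Kset_compact: "compact (Kset l)"
proof -
  have "{Img l' | l'. fst l' < k \<and> l' \<noteq> letter_inv l} \<subseteq> Img ` ({..<k} \<times> UNIV)" by auto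
  hence "finite {Img l' | l'. fst l' < k \<and> l' \<noteq> letter_inv l}"
    by (rule finite_subset) auto
  thus ?thesis unfolding Kset_def using Img_compact by (intro compact_Union) auto
qed

lemma Kset_Dom: "fst l < k \<Longrightarrow> Kset l \<subseteq> Dom l"
proof
  fix x assume l: "fst l < k" and x: "x \<in> Kset l"
  then obtain l' where l': "fst l' < k" "l' \<noteq> letter_inv l" "x \<in> Img l'" unfolding Kset_def by blast
  have "Img l' \<inter> Img (letter_inv l) = {}" using Img_disj l l' by simp
  thus "x \<in> Dom l" using l' unfolding Dom_def by blast
qed

lemma Img_Kset: "fst l' < k \<Longrightarrow> l' \<noteq> letter_inv l \<Longrightarrow> Img l' \<subseteq> Kset l"
  unfolding Kset_def by blast

lemma Sig_fst: "g \<in> Sig \<Longrightarrow> fst (g i) < k"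
  by (simp add: Sigma_words_def)
lemma Sig_red: "g \<in> Sig \<Longrightarrow> g (i+1) \<noteq> letter_inv (g i)"
  by (simp add: Sigma_words_def)
lemma Sig_red': "g \<in> Sig \<Longrightarrow> g i \<noteq> letter_inv (g (i+1))"
  using Sig_red[of g i] by (metis linv_linv)

lemma Img_Kset_next: "g \<in> Sig \<Longrightarrow> Img (g i) \<subseteq> Kset (g (i+1))"
  using Sig_red' Sig_fst Img_Kset by blast

lemma act_Kset: "fst l < k \<Longrightarrow> x \<in> Kset l \<Longrightarrow> act l x \<in> Img l"
  using Kset_Dom act_Dom by blast

end

context pp begin

primrec comp :: "(int \<Rightarrow> letter) \<Rightarrow> int \<Rightarrow> nat \<Rightarrow> 'a \<Rightarrow> 'a" where
  "comp g m 0 x = x"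
| "comp g m (Suc n) x = comp g m n (act (g (m - int n - 1)) x)"

lemma comp_outer: "comp g m (Suc n) x = act (g (m-1)) (comp g (m-1) n x)"
proof (induction n arbitrary: x)
  case 0 thus ?case by simp
next
  case (Suc n)
  have "comp g m (Suc (Suc n)) x = comp g m (Suc n) (act (g (m - int n - 2)) x)"
    by (simp add: algebra_simps)
  also have "\<dots> = act (g (m-1)) (comp g (m-1) n (act (g (m - int n - 2)) x))" by (rule Suc)
  also have "\<dots> = act (g (m-1)) (comp g (m-1) (Suc n) x)" by (simp add: algebra_simps)
  finally show ?case .
qed

lemma comp_add: "comp g m (a+b) x = comp g m a (comp g (m - int a) b x)"
  by (induction b arbitrary: x) (simp_all add: algebra_simps)

lemma comp_shift: "comp (\<lambda>i. g (i + c)) m n x = comp g (m + c) n x"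
  by (induction n arbitrary: x) (simp_all add: algebra_simps)

lemma comp_cong: "(\<And>i. m - int n \<le> i \<Longrightarrow> i < m \<Longrightarrow> g i = h i) \<Longrightarrow> comp g m n x = comp h m n x"
  by (induction n arbitrary: x) auto

lemma comp_cont: assumes g: "g \<in> Sig" shows "continuous_on UNIV (comp g m n)"
proof (induction n)
  case 0 thus ?case by (simp add: continuous_on_id')
next
  case (Suc n)
  have "continuous_on UNIV (\<lambda>x. comp g m n (act (g (m - int n - 1)) x))"
    by (rule continuous_on_compose2[OF Suc.IH act_cont[OF Sig_fst[OF g]]]) auto
  thus ?case by simp
qed

lemma comp_Kset: "g \<in> Sig \<Longrightarrow> u \<in> Kset (g (m - int n)) \<Longrightarrow> comp g m n u \<in> Kset (g m)"
proof (induction n arbitrary: u)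
  case 0 thus ?case by simp
next
  case (Suc n)
  have "act (g (m - int n - 1)) u \<in> Img (g (m - int n - 1))"
    using act_Kset Sig_fst Suc.prems by (simp add: algebra_simps)
  also have "\<dots> \<subseteq> Kset (g (m - int n))" using Img_Kset_next[OF Suc.prems(1), of "m - int n - 1"] by simp
  finally show ?case using Suc by simp
qed

lemma comp_Img: "g \<in> Sig \<Longrightarrow> u \<in> Kset (g (m - int (Suc n))) \<Longrightarrow> comp g m (Suc n) u \<in> Img (g (m-1))"
proof -
  assume g: "g \<in> Sig" and u: "u \<in> Kset (g (m - int (Suc n)))"
  have "comp g (m-1) n u \<in> Kset (g (m-1))" using comp_Kset[OF g, of u "m-1" n] u by (simp add: algebra_simps)
  thus ?thesis using comp_outer act_Kset Sig_fst g by simp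
qed

lemma comp_dist_le: "g \<in> Sig \<Longrightarrow> u \<in> Kset (g (m - int n)) \<Longrightarrow> v \<in> Kset (g (m - int n)) \<Longrightarrow>
   dist (comp g m n u) (comp g m n v) \<le> dist u v"
proof (induction n arbitrary: u v)
  case 0 thus ?case by simp
next
  case (Suc n)
  let ?l = "g (m - int n - 1)"
  have l: "fst ?l < k" using Sig_fst Suc.prems by simp
  have uv: "u \<in> Kset ?l" "v \<in> Kset ?l" using Suc.prems by (simp_all add: algebra_simps)
  have I: "Img ?l \<subseteq> Kset (g (m - int n))" using Img_Kset_next[OF Suc.prems(1), of "m - int n - 1"] by simp
  have "dist (comp g m (Suc n) u) (comp g m (Suc n) v) \<le> dist (act ?l u) (act ?l v)"
    using Suc.IH[OF Suc.prems(1)] act_Kset[OF l] uv I by auto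
  also have "\<dots> \<le> dist u v" using act_contr_le[OF l] Kset_Dom[OF l] uv by auto
  finally show ?case .
qed

lemma UC1:
  assumes l: "fst l < k" and r: "r > 0"
  shows "\<exists>e>0. \<forall>u\<in>Kset l. \<forall>v\<in>Kset l. r \<le> dist u v \<longrightarrow> dist (act l u) (act l v) \<le> dist u v - e"
proof -
  let ?S = "(Kset l \<times> Kset l) \<inter> {p. r \<le> dist (fst p) (snd p)}"
  let ?phi = "\<lambda>p. dist (fst p) (snd p) - dist (act l (fst p)) (act l (snd p))"
  show ?thesis
  proof (cases "?S = {}")
    case True thus ?thesis by (intro exI[of _ 1]) auto
  next
    case False
    have "closed {p::'a\<times>'a. r \<le> dist (fst p) (snd p)}"
      by (rule closed_Collect_le) (intro continuous_intros)+
    hence cS: "compact ?S" using Kset_compact by (intro compact_Int_closed compact_Times) auto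
    have "continuous_on ?S ?phi"
      by (intro continuous_intros continuous_on_compose2[OF act_cont[OF l]]) auto
    then obtain p where p: "p \<in> ?S" "\<forall>q\<in>?S. ?phi p \<le> ?phi q"
      using continuous_attains_inf[OF cS False] by blast
    have "fst p \<noteq> snd p" using p r by auto
    moreover have "fst p \<in> Dom l" "snd p \<in> Dom l" using Kset_Dom[OF l] p by auto
    ultimately have "?phi p > 0" using act_contr[OF l, of "fst p" "snd p"] by simp
    show ?thesis
    proof (intro exI[of _ "?phi p"] conjI ballI impI)
      fix u v assume uv: "u \<in> Kset l" "v \<in> Kset l" "r \<le> dist u v"
      hence "(u,v) \<in> ?S" by simp
      hence "?phi p \<le> ?phi (u,v)" using p(2) by blast
      thus "dist (act l u) (act l v) \<le> dist u v - ?phi p" by simp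
    qed fact
  qed
qed

lemma UC:
  assumes r: "r > 0"
  shows "\<exists>e>0. \<forall>l. fst l < k \<longrightarrow> (\<forall>u\<in>Kset l. \<forall>v\<in>Kset l. r \<le> dist u v \<longrightarrow> dist (act l u) (act l v) \<le> dist u v - e)"
proof -
  let ?L = "{..<k} \<times> (UNIV::bool set)"
  have "\<forall>l\<in>?L. \<exists>e>0. \<forall>u\<in>Kset l. \<forall>v\<in>Kset l. r \<le> dist u v \<longrightarrow> dist (act l u) (act l v) \<le> dist u v - e"
    using UC1 r by auto
  from bchoice[OF this] obtain e where e: "\<forall>l\<in>?L. e l > 0 \<and> (\<forall>u\<in>Kset l. \<forall>v\<in>Kset l. r \<le> dist u v \<longrightarrow> dist (act l u) (act l v) \<le> dist u v - e l)"
    by blast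
  have fin: "finite ?L" by simp
  have ne: "?L \<noteq> {}" using k1 by auto
  define e0 where "e0 = Min (e ` ?L)"
  have "e0 > 0" unfolding e0_def using fin ne e by (subst Min_gr_iff) auto
  moreover have "\<forall>l\<in>?L. e0 \<le> e l" unfolding e0_def using fin by auto
  ultimately show ?thesis
  proof (intro exI[of _ e0] conjI allI impI ballI)
    fix l u v assume l: "fst l < k" and uv: "u \<in> Kset l" "v \<in> Kset l" "r \<le> dist u v"
    have lL: "l \<in> ?L" using l by (cases l) auto
    have "dist (act l u) (act l v) \<le> dist u v - e l" using e lL uv by blast
    moreover have "e0 \<le> e l" using lL \<open>\<forall>l\<in>?L. e0 \<le> e l\<close> by blast
    ultimately show "dist (act l u) (act l v) \<le> dist u v - e0" by simp
  qed

qed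

lemma bnd: "\<exists>M. \<forall>x y::'a. dist x y \<le> M"
proof -
  have "bounded (UNIV::'a set)" using compact_imp_bounded[OF cpt] .
  then obtain M where "\<forall>x\<in>(UNIV::'a set). \<forall>y\<in>UNIV. dist x y \<le> M" unfolding bounded_two_points by blast
  thus ?thesis by blast
qed

lemma comp_dist:
  assumes e: "\<forall>l. fst l < k \<longrightarrow> (\<forall>u\<in>Kset l. \<forall>v\<in>Kset l. r \<le> dist u v \<longrightarrow> dist (act l u) (act l v) \<le> dist u v - e)"
   and e0: "e \<ge> 0"
  shows "g \<in> Sig \<Longrightarrow> u \<in> Kset (g (m - int n)) \<Longrightarrow> v \<in> Kset (g (m - int n)) \<Longrightarrow>
   r \<le> dist (comp g m n u) (comp g m n v) \<Longrightarrow> dist (comp g m n u) (comp g m n v) \<le> dist u v - n * e"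
proof (induction n arbitrary: u v)
  case 0 thus ?case by simp
next
  case (Suc n)
  let ?l = "g (m - int n - 1)"
  have l: "fst ?l < k" using Sig_fst Suc.prems by simp
  have uv: "u \<in> Kset ?l" "v \<in> Kset ?l" using Suc.prems by (simp_all add: algebra_simps)
  have I: "Img ?l \<subseteq> Kset (g (m - int n))" using Img_Kset_next[OF Suc.prems(1), of "m - int n - 1"] by simp
  have a: "act ?l u \<in> Kset (g (m - int n))" "act ?l v \<in> Kset (g (m - int n))" using act_Kset[OF l] uv I by auto
  have IH: "dist (comp g m (Suc n) u) (comp g m (Suc n) v) \<le> dist (act ?l u) (act ?l v) - n * e"
    using Suc.IH[OF Suc.prems(1) a] Suc.prems(4) by simp
  have "0 \<le> real n * e" using e0 by simp
  hence "r \<le> dist (act ?l u) (act ?l v)" using IH Suc.prems(4) by linarith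
  moreover have "dist (act ?l u) (act ?l v) \<le> dist u v" using act_contr_le[OF l] Kset_Dom[OF l] uv by auto
  ultimately have "r \<le> dist u v" by simp
  hence "dist (act ?l u) (act ?l v) \<le> dist u v - e" using e l uv by blast
  thus ?case using IH by (simp add: algebra_simps)
qed

lemma DIAM:
  assumes r: "r > 0"
  shows "\<exists>N. \<forall>n\<ge>N. \<forall>g\<in>Sig. \<forall>m u v. u \<in> Kset (g (m - int n)) \<longrightarrow> v \<in> Kset (g (m - int n)) \<longrightarrow>
           dist (comp g m n u) (comp g m n v) < r"
proof -
  obtain e where e: "e > 0" "\<forall>l. fst l < k \<longrightarrow> (\<forall>u\<in>Kset l. \<forall>v\<in>Kset l. r \<le> dist u v \<longrightarrow> dist (act l u) (act l v) \<le> dist u v - e)"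
    using UC[OF r] by blast
  obtain M where M: "\<forall>x y::'a. dist x y \<le> M" using bnd by blast
  obtain N::nat where N: "M / e < N" using reals_Archimedean2 by blast
  have "\<forall>n\<ge>N. \<forall>g\<in>Sig. \<forall>m u v. u \<in> Kset (g (m - int n)) \<longrightarrow> v \<in> Kset (g (m - int n)) \<longrightarrow>
           dist (comp g m n u) (comp g m n v) < r"
  proof (intro allI impI ballI)
    fix n g m u v assume n: "N \<le> n" and g: "g \<in> Sig" and uv: "u \<in> Kset (g (m - int n))" "v \<in> Kset (g (m - int n))"
    show "dist (comp g m n u) (comp g m n v) < r"
    proof (rule ccontr)
      assume "\<not> ?thesis"
      hence "dist (comp g m n u) (comp g m n v) \<le> dist u v - n * e"
        using comp_dist[OF e(2) _ g uv] e by simp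
      moreover have "M < N * e" using N e by (simp add: divide_less_eq)
      moreover have "real N * e \<le> real n * e" using n e by (simp add: mult_right_mono)
      moreover have "dist u v \<le> M" using M by blast
      moreover have "0 \<le> dist (comp g m n u) (comp g m n v)" by simp
      ultimately show False by linarith
    qed
  qed
  thus ?thesis by blast
qed

end

definition shiftn :: "(int \<Rightarrow> letter) \<Rightarrow> nat \<Rightarrow> (int \<Rightarrow> letter)" where
  "shiftn g n = (\<lambda>i. g (i + int n))"
definition wrev :: "(int \<Rightarrow> letter) \<Rightarrow> (int \<Rightarrow> letter)" where
  "wrev g = (\<lambda>i. letter_inv (g (-1 - i)))"

lemma wrev_wrev[simp]: "wrev (wrev g) = g"
  by (simp add: wrev_def letter_inv_def)
lemma shift_shiftn: "shift (shiftn g n) = shiftn g (Suc n)"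
  by (simp add: shift_def shiftn_def algebra_simps)
lemma shiftn_0[simp]: "shiftn g 0 = g" by (simp add: shiftn_def)

context pp begin

lemma transl_Sig: "g \<in> Sig \<Longrightarrow> (\<lambda>i. g (i + c)) \<in> Sig"
  unfolding Sigma_words_def by (simp add: algebra_simps) (metis add.commute add.left_commute)
lemma shift_Sig: "g \<in> Sig \<Longrightarrow> shift g \<in> Sig"
  unfolding shift_def by (rule transl_Sig)
lemma shiftn_Sig: "g \<in> Sig \<Longrightarrow> shiftn g n \<in> Sig"
  unfolding shiftn_def by (rule transl_Sig)
lemma wrev_Sig: "g \<in> Sig \<Longrightarrow> wrev g \<in> Sig"
proof -
  assume g: "g \<in> Sig"
  have "\<forall>i. wrev g (i+1) \<noteq> letter_inv (wrev g i)"
  proof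
    fix i :: int
    have e1: "-2 - i + 1 = -1 - i" by simp
    have e2: "-1 - (i + 1) = -2 - i" by simp
    have "g (-2 - i + 1) \<noteq> letter_inv (g (-2 - i))" using Sig_red[OF g] .
    hence "g (-1 - i) \<noteq> letter_inv (g (-2 - i))" unfolding e1 .
    hence "letter_inv (g (-2 - i)) \<noteq> g (-1 - i)" by metis
    thus "wrev g (i+1) \<noteq> letter_inv (wrev g i)" unfolding wrev_def e2 linv_linv .
  qed
  thus ?thesis using g unfolding Sigma_words_def wrev_def by simp
qed

definition W :: "(int \<Rightarrow> letter) \<Rightarrow> nat \<Rightarrow> 'a set" where
  "W g n = comp g 0 n ` Img (g (- int n - 1))"

lemma W_0: "W g 0 = Img (g (-1))" by (simp add: W_def)

lemma Img_Kset_next': "g \<in> Sig \<Longrightarrow> j = i + 1 \<Longrightarrow> Img (g i) \<subseteq> Kset (g j)"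
  using Img_Kset_next by blast

lemma W_Suc_sub: assumes g: "g \<in> Sig" shows "W g (Suc n) \<subseteq> W g n"
proof
  fix y assume "y \<in> W g (Suc n)"
  then obtain u where u: "u \<in> Img (g (- int n - 2))" "y = comp g 0 (Suc n) u"
    unfolding W_def by (auto simp: algebra_simps)
  have "u \<in> Kset (g (- int n - 1))" using u Img_Kset_next'[OF g, of "- int n - 1" "- int n - 2"] by auto
  hence "act (g (- int n - 1)) u \<in> Img (g (- int n - 1))" using act_Kset Sig_fst[OF g] by blast
  moreover have "y = comp g 0 n (act (g (- int n - 1)) u)" using u by simp
  ultimately show "y \<in> W g n" unfolding W_def by blast
qed

lemma W_mono: assumes g: "g \<in> Sig" shows "m \<le> n \<Longrightarrow> W g n \<subseteq> W g m"
proof -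
  have "decseq (W g)" using W_Suc_sub[OF g] by (intro decseq_SucI) auto
  thus "m \<le> n \<Longrightarrow> W g n \<subseteq> W g m" by (simp add: decseq_def)
qed

lemma W_compact: "g \<in> Sig \<Longrightarrow> compact (W g n)"
  unfolding W_def
  by (rule compact_continuous_image[OF continuous_on_subset[OF comp_cont]]) (auto intro: Img_compact Sig_fst)

lemma W_ne: "g \<in> Sig \<Longrightarrow> W g n \<noteq> {}"
  unfolding W_def using Img_ne Sig_fst by auto

lemma W_close: assumes r: "r > 0"
  shows "\<exists>N. \<forall>n\<ge>N. \<forall>g\<in>Sig. \<forall>y\<in>W g n. \<forall>z\<in>W g n. dist y z < r"
proof -
  obtain N where N: "\<forall>n\<ge>N. \<forall>g\<in>Sig. \<forall>m u v. u \<in> Kset (g (m - int n)) \<longrightarrow> v \<in> Kset (g (m - int n)) \<longrightarrow>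
           dist (comp g m n u) (comp g m n v) < r" using DIAM[OF r] by blast
  have "\<forall>n\<ge>N. \<forall>g\<in>Sig. \<forall>y\<in>W g n. \<forall>z\<in>W g n. dist y z < r"
  proof (intro allI impI ballI)
    fix n g y z assume n: "N \<le> n" and g: "g \<in> Sig" and yz: "y \<in> W g n" "z \<in> W g n"
    then obtain u v where uv: "u \<in> Img (g (- int n - 1))" "v \<in> Img (g (- int n - 1))"
      "y = comp g 0 n u" "z = comp g 0 n v" unfolding W_def by blast
    have "u \<in> Kset (g (0 - int n))" "v \<in> Kset (g (0 - int n))" using uv Img_Kset_next'[OF g] by force+
    thus "dist y z < r" using N n g uv by blast
  qed
  thus ?thesis by blast
qed

definition xp :: "(int \<Rightarrow> letter) \<Rightarrow> 'a" where
  "xp g = (SOME x. \<forall>n. x \<in> W g n)"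

lemma W_Inter_ne: assumes g: "g \<in> Sig" shows "\<exists>x. \<forall>n. x \<in> W g n"
proof -
  have "UNIV \<inter> (\<Inter>i\<in>UNIV. W g i) \<noteq> {}"
  proof (rule compact_imp_fip_image[OF cpt])
    show "\<And>i. i \<in> UNIV \<Longrightarrow> closed (W g i)" using W_compact[OF g] compact_imp_closed by blast
  next
    fix I' :: "nat set" assume I': "finite I'" "I' \<subseteq> UNIV"
    show "UNIV \<inter> (\<Inter>i\<in>I'. W g i) \<noteq> {}"
    proof (cases "I' = {}")
      case True thus ?thesis by simp
    next
      case False
      have "\<forall>i\<in>I'. W g (Max I') \<subseteq> W g i" using W_mono[OF g] Max_ge[OF I'(1)] by blast
      hence "W g (Max I') \<subseteq> (\<Inter>i\<in>I'. W g i)" by blast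
      thus ?thesis using W_ne[OF g] by blast
    qed
  qed
  thus ?thesis by blast
qed

lemma xp_in: "g \<in> Sig \<Longrightarrow> xp g \<in> W g n"
  unfolding xp_def using someI_ex[OF W_Inter_ne] by blast

lemma xp_unique: assumes g: "g \<in> Sig" and y: "\<forall>n. y \<in> W g n" shows "y = xp g"
proof -
  have "\<forall>r>0. dist y (xp g) < r"
  proof (intro allI impI)
    fix r :: real assume "r > 0"
    then obtain N where "\<forall>n\<ge>N. \<forall>g\<in>Sig. \<forall>y\<in>W g n. \<forall>z\<in>W g n. dist y z < r" using W_close by blast
    thus "dist y (xp g) < r" using y xp_in[OF g] g by blast
  qed
  thus ?thesis by (metis dist_pos_lt less_irrefl)
qed

lemma xp_Img: "g \<in> Sig \<Longrightarrow> xp g \<in> Img (g (-1))"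
  using xp_in[of g 0] W_0 by simp

lemma W_shift: assumes g: "g \<in> Sig" shows "W (shift g) (Suc n) = act (g 0) ` W g n"
proof -
  have "comp (shift g) 0 (Suc n) x = act (g 0) (comp g 0 n x)" for x
  proof -
    have "comp (shift g) 0 (Suc n) x = comp g 1 (Suc n) x" unfolding shift_def
      using comp_shift[of g 1 0 "Suc n" x] by (simp del: comp.simps)
    also have "\<dots> = act (g 0) (comp g 0 n x)" using comp_outer[of g 1 n x] by (simp del: comp.simps)
    finally show ?thesis .
  qed
  moreover have "shift g (- int (Suc n) - 1) = g (- int n - 1)" unfolding shift_def by (rule arg_cong[where f=g]) simp
  ultimately show ?thesis unfolding W_def by (simp add: image_image)
qed

lemma xp_shift: assumes g: "g \<in> Sig" shows "xp (shift g) = act (g 0) (xp g)"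
proof -
  have "\<forall>n. act (g 0) (xp g) \<in> W (shift g) n"
  proof
    fix n
    have "act (g 0) (xp g) \<in> W (shift g) (Suc n)" using W_shift[OF g] xp_in[OF g] by blast
    thus "act (g 0) (xp g) \<in> W (shift g) n" using W_mono[OF shift_Sig[OF g], of n "Suc n"] by auto
  qed
  thus ?thesis using xp_unique[OF shift_Sig[OF g]] by simp
qed

lemma xp_local: assumes r: "r > 0"
  shows "\<exists>N::nat. \<forall>g\<in>Sig. \<forall>h\<in>Sig. (\<forall>i. - int N - 1 \<le> i \<and> i \<le> -1 \<longrightarrow> g i = h i) \<longrightarrow> dist (xp g) (xp h) < r"
proof -
  obtain N where N: "\<forall>n\<ge>N. \<forall>g\<in>Sig. \<forall>y\<in>W g n. \<forall>z\<in>W g n. dist y z < r" using W_close[OF r] by blast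
  have "\<forall>g\<in>Sig. \<forall>h\<in>Sig. (\<forall>i. - int N - 1 \<le> i \<and> i \<le> -1 \<longrightarrow> g i = h i) \<longrightarrow> dist (xp g) (xp h) < r"
  proof (intro ballI impI)
    fix g h assume g: "g \<in> Sig" and h: "h \<in> Sig" and a: "\<forall>i. - int N - 1 \<le> i \<and> i \<le> -1 \<longrightarrow> g i = h i"
    have "comp g 0 N = comp h 0 N" using a by (intro ext comp_cong) auto
    moreover have "g (- int N - 1) = h (- int N - 1)" using a by simp
    ultimately have "W g N = W h N" unfolding W_def by simp
    hence "xp g \<in> W g N" "xp h \<in> W g N" using xp_in[OF g] xp_in[OF h] by auto
    thus "dist (xp g) (xp h) < r" using N g by blast
  qed
  thus ?thesis by blast
qed

definition xm :: "(int \<Rightarrow> letter) \<Rightarrow> 'a" where "xm g = xp (wrev g)"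

lemma xm_Img: "g \<in> Sig \<Longrightarrow> xm g \<in> Img (letter_inv (g 0))"
  unfolding xm_def using xp_Img[OF wrev_Sig] by (simp add: wrev_def)

lemma xm_shift: assumes g: "g \<in> Sig" shows "xm (shift g) = act (g 0) (xm g)"
proof -
  let ?h = "wrev (shift g)"
  have h: "?h \<in> Sig" using wrev_Sig shift_Sig g by blast
  have "shift ?h = wrev g" by (simp add: fun_eq_iff shift_def wrev_def, smt (verit))
  hence "xm g = act (?h 0) (xm (shift g))" unfolding xm_def using xp_shift[OF h] by simp
  moreover have "?h 0 = letter_inv (g 0)" by (simp add: wrev_def shift_def)
  ultimately show ?thesis using act_inv2 Sig_fst[OF g] by simp
qed

lemma xm_local: assumes r: "r > 0"
  shows "\<exists>N::nat. \<forall>g\<in>Sig. \<forall>h\<in>Sig. (\<forall>i. 0 \<le> i \<and> i \<le> int N \<longrightarrow> g i = h i) \<longrightarrow> dist (xm g) (xm h) < r"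
proof -
  obtain N::nat where N: "\<forall>g\<in>Sig. \<forall>h\<in>Sig. (\<forall>i. - int N - 1 \<le> i \<and> i \<le> -1 \<longrightarrow> g i = h i) \<longrightarrow> dist (xp g) (xp h) < r"
    using xp_local[OF r] by blast
  have "\<forall>g\<in>Sig. \<forall>h\<in>Sig. (\<forall>i. 0 \<le> i \<and> i \<le> int N \<longrightarrow> g i = h i) \<longrightarrow> dist (xm g) (xm h) < r"
  proof (intro ballI impI)
    fix g h assume g: "g \<in> Sig" and h: "h \<in> Sig" and a: "\<forall>i. 0 \<le> i \<and> i \<le> int N \<longrightarrow> g i = h i"
    have "\<forall>i. - int N - 1 \<le> i \<and> i \<le> -1 \<longrightarrow> wrev g i = wrev h i" using a by (simp add: wrev_def)
    thus "dist (xm g) (xm h) < r" unfolding xm_def using N wrev_Sig g h by blast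
  qed
  thus ?thesis by blast
qed

lemma comp_wrev: assumes g: "g \<in> Sig" shows "comp (wrev g) 0 n (comp g (int n) n y) = y"
proof (induction n arbitrary: y)
  case 0 thus ?case by simp
next
  case (Suc n)
  have "comp g (int (Suc n)) (Suc n) y = act (g (int n)) (comp g (int n) n y)"
    using comp_outer[of g "int (Suc n)" n y] by simp
  moreover have "wrev g (0 - int n - 1) = letter_inv (g (int n))" by (simp add: wrev_def)
  ultimately show ?case using Suc act_inv1 Sig_fst[OF g] by simp
qed

lemma comp_inj: "g \<in> Sig \<Longrightarrow> comp g (int n) n a = comp g (int n) n b \<Longrightarrow> a = b"
  by (metis comp_wrev)

lemma inv_iter: assumes phi: "\<forall>g\<in>Sig. phi (shift g) = act (g 0) (phi g)" and g: "g \<in> Sig"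
  shows "phi (shiftn g n) = comp g (int n) n (phi g)"
proof (induction n)
  case 0 thus ?case by simp
next
  case (Suc n)
  have "phi (shiftn g (Suc n)) = act (shiftn g n 0) (phi (shiftn g n))"
    using phi shiftn_Sig[OF g] shift_shiftn by metis
  also have "\<dots> = act (g (int n)) (comp g (int n) n (phi g))" using Suc by (simp add: shiftn_def)
  also have "\<dots> = comp g (int (Suc n)) (Suc n) (phi g)" using comp_outer[of g "int (Suc n)" n] by simp
  finally show ?case .
qed

lemma UB: assumes d: "d > 0" and r: "r > 0"
  shows "\<exists>P. \<forall>h\<in>Sig. \<forall>y. \<forall>p\<ge>P. d \<le> dist y (xm h) \<longrightarrow> dist (comp h (int p) p y) (xp (shiftn h p)) < r"
proof -
  obtain N1 where N1: "\<forall>n\<ge>N1. \<forall>g\<in>Sig. \<forall>y\<in>W g n. \<forall>z\<in>W g n. dist y z < d" using W_close[OF d] by blast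
  obtain N2 where N2: "\<forall>n\<ge>N2. \<forall>g\<in>Sig. \<forall>y\<in>W g n. \<forall>z\<in>W g n. dist y z < r" using W_close[OF r] by blast
  have "\<forall>h\<in>Sig. \<forall>y. \<forall>p\<ge>N1 + 1 + N2. d \<le> dist y (xm h) \<longrightarrow> dist (comp h (int p) p y) (xp (shiftn h p)) < r"
  proof (intro ballI allI impI)
    fix h y p assume h: "h \<in> Sig" and p: "N1 + 1 + N2 \<le> p" and dy: "d \<le> dist y (xm h)"
    define z where "z = comp h (int N1) N1 y"
    have "z \<notin> Img (letter_inv (h (int N1)))"
    proof
      assume zi: "z \<in> Img (letter_inv (h (int N1)))"
      have "wrev h (- int N1 - 1) = letter_inv (h (int N1))" by (simp add: wrev_def)
      hence "comp (wrev h) 0 N1 z \<in> W (wrev h) N1" unfolding W_def using zi by simp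
      hence "y \<in> W (wrev h) N1" using comp_wrev[OF h] unfolding z_def by simp
      hence "dist y (xm h) < d" unfolding xm_def using N1 xp_in wrev_Sig[OF h] by blast
      thus False using dy by simp
    qed
    hence zD: "z \<in> Dom (h (int N1))" by (simp add: Dom_def)
    define w where "w = act (h (int N1)) z"
    have wI: "w \<in> Img (h (int N1))" unfolding w_def using act_Dom zD Sig_fst[OF h] by blast
    have cw: "comp h (int N1 + 1) (Suc N1) y = w" unfolding w_def z_def using comp_outer[of h "int N1 + 1" N1 y] by simp
    define m where "m = p - (N1 + 1)"
    have pm: "p = m + (N1 + 1)" "N2 \<le> m" using p unfolding m_def by auto
    have "comp h (int p) p y = comp h (int p) m (comp h (int p - int m) (N1 + 1) y)"
      using comp_add[of h "int p" m "N1+1" y] pm(1) by simp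
    also have "int p - int m = int N1 + 1" using pm(1) by simp
    also have "comp h (int N1 + 1) (N1 + 1) y = w" using cw by simp
    also have "comp h (int p) m w = comp (shiftn h p) 0 m w" unfolding shiftn_def comp_shift by simp
    finally have e: "comp h (int p) p y = comp (shiftn h p) 0 m w" .
    have "shiftn h p (- int m - 1) = h (int N1)" unfolding shiftn_def using pm(1) by (simp add: algebra_simps)
    hence "comp h (int p) p y \<in> W (shiftn h p) m" unfolding W_def e using wI by simp
    thus "dist (comp h (int p) p y) (xp (shiftn h p)) < r" using N2 pm(2) xp_in shiftn_Sig[OF h] by blast
  qed
  thus ?thesis by blast
qed

end

abbreviation PT :: "(int \<Rightarrow> letter) topology" where
  "PT \<equiv> product_topology (\<lambda>_. discrete_topology UNIV) UNIV"

lemma topspace_PT[simp]: "topspace PT = UNIV" by simp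

lemma cylPT: assumes F: "finite F" shows "openin PT {h. \<forall>i\<in>F. h i = g i}"
proof -
  define V where "V i = (if i \<in> F then {g i} else UNIV)" for i
  have "{i \<in> UNIV. V i \<noteq> topspace (discrete_topology UNIV)} \<subseteq> F" by (auto simp: V_def)
  hence "finite {i \<in> UNIV. V i \<noteq> topspace (discrete_topology UNIV)}" using F finite_subset by blast
  hence "openin PT (PiE UNIV V)" by (simp add: openin_PiE_gen)
  moreover have "PiE UNIV V = {h. \<forall>i\<in>F. h i = g i}" by (auto simp: V_def PiE_UNIV_domain Pi_iff) (metis singletonD)
  ultimately show ?thesis by simp
qed

lemma topspace_Sig: "topspace (Sigma_top k) = Sigma_words k"
  unfolding Sigma_top_def by simp

lemma topspace_Delta: "topspace (Delta_top k :: ((int \<Rightarrow> letter) \<times> 'a::topological_space) topology) = Sigma_words k \<times> UNIV"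
  unfolding Delta_top_def by (simp add: topspace_Sig)

lemma cyl_open: "finite F \<Longrightarrow> openin (Sigma_top k) {h \<in> Sigma_words k. \<forall>i\<in>F. h i = g i}"
  unfolding Sigma_top_def openin_subtopology using cylPT by blast

lemma finite_int_bound: "finite (S::int set) \<Longrightarrow> \<exists>N::nat. \<forall>i\<in>S. \<bar>i\<bar> \<le> int N"
proof (induction S rule: finite_induct)
  case empty thus ?case by simp
next
  case (insert x S)
  then obtain N::nat where "\<forall>i\<in>S. \<bar>i\<bar> \<le> int N" by blast
  thus ?case by (intro exI[of _ "max N (nat \<bar>x\<bar>)"]) auto
qed

lemma cont_crit:
  fixes phi :: "(int \<Rightarrow> letter) \<Rightarrow> 'a::metric_space"
  assumes H: "\<forall>g\<in>Sigma_words k. \<forall>r>0. \<exists>N::nat. \<forall>h\<in>Sigma_words k. (\<forall>i. \<bar>i\<bar> \<le> int N \<longrightarrow> h i = g i) \<longrightarrow> dist (phi h) (phi g) < r"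
  shows "continuous_map (Sigma_top k) euclidean phi"
  unfolding continuous_map
proof (intro conjI allI impI)
  show "phi ` topspace (Sigma_top k) \<subseteq> topspace euclidean" by simp
next
  fix U :: "'a set" assume U: "openin euclidean U"
  show "openin (Sigma_top k) {x \<in> topspace (Sigma_top k). phi x \<in> U}"
  proof (subst openin_subopen, intro ballI)
    fix g assume "g \<in> {x \<in> topspace (Sigma_top k). phi x \<in> U}"
    hence g: "g \<in> Sigma_words k" "phi g \<in> U" by (auto simp: topspace_Sig)
    obtain r where r: "r > 0" "ball (phi g) r \<subseteq> U" using U g(2) open_contains_ball by (metis open_openin)
    obtain N::nat where N: "\<forall>h\<in>Sigma_words k. (\<forall>i. \<bar>i\<bar> \<le> int N \<longrightarrow> h i = g i) \<longrightarrow> dist (phi h) (phi g) < r"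
      using H g r by blast
    let ?T = "{h \<in> Sigma_words k. \<forall>i\<in>{-int N..int N}. h i = g i}"
    have "openin (Sigma_top k) ?T" by (rule cyl_open) simp
    moreover have "g \<in> ?T" using g by simp
    moreover have "?T \<subseteq> {x \<in> topspace (Sigma_top k). phi x \<in> U}"
    proof
      fix h assume h: "h \<in> ?T"
      hence "dist (phi h) (phi g) < r" using N by (auto simp: abs_le_iff)
      thus "h \<in> {x \<in> topspace (Sigma_top k). phi x \<in> U}" using h r by (auto simp: topspace_Sig dist_commute)
    qed
    ultimately show "\<exists>T. openin (Sigma_top k) T \<and> g \<in> T \<and> T \<subseteq> {x \<in> topspace (Sigma_top k). phi x \<in> U}" by blast
  qed
qed

lemma cont_local:
  fixes phi :: "(int \<Rightarrow> letter) \<Rightarrow> 'a::metric_space"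
  assumes c: "continuous_map (Sigma_top k) euclidean phi" and g: "g \<in> Sigma_words k" and r: "r > 0"
  shows "\<exists>N::nat. \<forall>h\<in>Sigma_words k. (\<forall>i. \<bar>i\<bar> \<le> int N \<longrightarrow> h i = g i) \<longrightarrow> dist (phi h) (phi g) < r"
proof -
  have "openin (Sigma_top k) {x \<in> topspace (Sigma_top k). phi x \<in> ball (phi g) r}"
    by (rule openin_continuous_map_preimage[OF c]) simp
  then obtain T where T: "openin PT T" "{x \<in> topspace (Sigma_top k). phi x \<in> ball (phi g) r} = T \<inter> Sigma_words k"
    unfolding Sigma_top_def openin_subtopology by blast
  have "g \<in> {x \<in> topspace (Sigma_top k). phi x \<in> ball (phi g) r}" using g r by (simp add: topspace_Sig)
  hence "g \<in> T" using T(2) by blast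
  from bspec[OF iffD1[OF openin_product_topology_alt T(1)] this]
  obtain U where U: "finite {i \<in> UNIV. U i \<noteq> topspace (discrete_topology (UNIV::letter set))}"
     "g \<in> PiE UNIV U" "PiE UNIV U \<subseteq> T"
    by blast
  obtain N::nat where N: "\<forall>i\<in>{i \<in> UNIV. U i \<noteq> topspace (discrete_topology (UNIV::letter set))}. \<bar>i\<bar> \<le> int N"
    using finite_int_bound[OF U(1)] by blast
  have "\<forall>h\<in>Sigma_words k. (\<forall>i. \<bar>i\<bar> \<le> int N \<longrightarrow> h i = g i) \<longrightarrow> dist (phi h) (phi g) < r"
  proof (intro ballI impI)
    fix h assume h: "h \<in> Sigma_words k" and a: "\<forall>i. \<bar>i\<bar> \<le> int N \<longrightarrow> h i = g i"
    have "h \<in> PiE UNIV U"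
    proof -
      have "h i \<in> U i" for i
      proof (cases "U i = UNIV")
        case False
        hence "\<bar>i\<bar> \<le> int N" using N by auto
        thus ?thesis using a U(2) by (auto simp: PiE_UNIV_domain)
      qed simp
      thus ?thesis by (simp add: PiE_UNIV_domain)
    qed
    hence "h \<in> T \<inter> Sigma_words k" using U(3) h by blast
    hence "phi h \<in> ball (phi g) r" using T(2) by blast
    thus "dist (phi h) (phi g) < r" by (simp add: dist_commute)
  qed
  thus ?thesis by blast
qed

lemma Sig_closed: "closedin PT (Sigma_words k)"
  unfolding closedin_def
proof (intro conjI)
  show "openin PT (topspace PT - Sigma_words k)"
  proof (subst openin_subopen, intro ballI)
    fix g assume "g \<in> topspace PT - Sigma_words k"
    then obtain i where i: "\<not> fst (g i) < k \<or> g (i+1) = letter_inv (g i)" by (auto simp: Sigma_words_def)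
    let ?T = "{h. \<forall>j\<in>{i, i+1}. h j = g j}"
    have "openin PT ?T" by (rule cylPT) simp
    moreover have "?T \<subseteq> topspace PT - Sigma_words k" using i unfolding Sigma_words_def by (auto; metis)
    ultimately show "\<exists>T. openin PT T \<and> g \<in> T \<and> T \<subseteq> topspace PT - Sigma_words k" by blast
  qed
qed simp

lemma Sig_compact: "compactin (Sigma_top k) (Sigma_words k)"
proof -
  let ?L = "{l::letter. fst l < k}"
  have "finite ?L"
  proof -
    have "?L \<subseteq> {..<k} \<times> UNIV" by auto
    thus ?thesis by (rule finite_subset) simp
  qed
  hence "compactin PT (PiE UNIV (\<lambda>_. ?L))" by (simp add: compactin_PiE finite_imp_compactin)
  moreover have "Sigma_words k \<subseteq> PiE UNIV (\<lambda>_. ?L)" by (auto simp: Sigma_words_def PiE_UNIV_domain)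
  ultimately have "compactin PT (Sigma_words k)" using closed_compactin Sig_closed by blast
  thus ?thesis unfolding Sigma_top_def by (simp add: compactin_subtopology)
qed


context pp begin

abbreviation T where "T \<equiv> skew f finv"
abbreviation X where "X \<equiv> (Delta_top k :: ((int \<Rightarrow> letter) \<times> 'a) topology)"

definition sp :: "(int \<Rightarrow> letter) \<Rightarrow> (int \<Rightarrow> letter) \<times> 'a" where "sp g = (g, xp g)"
definition sm :: "(int \<Rightarrow> letter) \<Rightarrow> (int \<Rightarrow> letter) \<times> 'a" where "sm g = (g, xm g)"

lemma skew_eq: "T (g, x) = (shift g, act (g 0) x)"
  by (simp add: skew_def act_def)

lemma skew_pow: "(T ^^ n) p = (shiftn (fst p) n, comp (fst p) (int n) n (snd p))"
proof (induction n)
  case 0 thus ?case by simp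
next
  case (Suc n)
  have "(T ^^ Suc n) p = T (shiftn (fst p) n, comp (fst p) (int n) n (snd p))" using Suc by simp
  also have "\<dots> = (shift (shiftn (fst p) n), act (shiftn (fst p) n 0) (comp (fst p) (int n) n (snd p)))"
    by (rule skew_eq)
  also have "\<dots> = (shiftn (fst p) (Suc n), act (fst p (int n)) (comp (fst p) (int n) n (snd p)))"
    by (simp only: shift_shiftn) (simp add: shiftn_def)
  also have "act (fst p (int n)) (comp (fst p) (int n) n (snd p)) = comp (fst p) (int (Suc n)) (Suc n) (snd p)"
    using comp_outer[of "fst p" "int (Suc n)" n] by simp
  finally show ?case .
qed

lemma Sig_ne: "Sig \<noteq> {}"
proof -
  have "(\<lambda>i::int. (0::nat, True)) \<in> Sig" using k1 by (simp add: Sigma_words_def letter_inv_def)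
  thus ?thesis by blast
qed

lemma xp_cont: "continuous_map (Sigma_top k) euclidean xp"
proof (rule cont_crit, intro ballI allI impI)
  fix g and r :: real assume g: "g \<in> Sig" and r: "r > 0"
  obtain N::nat where N: "\<forall>g\<in>Sig. \<forall>h\<in>Sig. (\<forall>i. - int N - 1 \<le> i \<and> i \<le> -1 \<longrightarrow> g i = h i) \<longrightarrow> dist (xp g) (xp h) < r"
    using xp_local[OF r] by blast
  show "\<exists>N::nat. \<forall>h\<in>Sig. (\<forall>i. \<bar>i\<bar> \<le> int N \<longrightarrow> h i = g i) \<longrightarrow> dist (xp h) (xp g) < r"
  proof (intro exI[of _ "Suc N"] ballI impI)
    fix h assume h: "h \<in> Sig" and a: "\<forall>i. \<bar>i\<bar> \<le> int (Suc N) \<longrightarrow> h i = g i"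
    have "\<forall>i. - int N - 1 \<le> i \<and> i \<le> -1 \<longrightarrow> h i = g i" using a by auto
    thus "dist (xp h) (xp g) < r" using N h g by blast
  qed
qed

lemma xm_cont: "continuous_map (Sigma_top k) euclidean xm"
proof (rule cont_crit, intro ballI allI impI)
  fix g and r :: real assume g: "g \<in> Sig" and r: "r > 0"
  obtain N::nat where N: "\<forall>g\<in>Sig. \<forall>h\<in>Sig. (\<forall>i. 0 \<le> i \<and> i \<le> int N \<longrightarrow> g i = h i) \<longrightarrow> dist (xm g) (xm h) < r"
    using xm_local[OF r] by blast
  show "\<exists>N::nat. \<forall>h\<in>Sig. (\<forall>i. \<bar>i\<bar> \<le> int N \<longrightarrow> h i = g i) \<longrightarrow> dist (xm h) (xm g) < r"
  proof (intro exI[of _ "N"] ballI impI)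
    fix h assume h: "h \<in> Sig" and a: "\<forall>i. \<bar>i\<bar> \<le> int N \<longrightarrow> h i = g i"
    have "\<forall>i. 0 \<le> i \<and> i \<le> int N \<longrightarrow> h i = g i" using a by auto
    thus "dist (xm h) (xm g) < r" using N h g by blast
  qed
qed

lemma id_cont: "continuous_map (Sigma_top k) (Sigma_top k) (\<lambda>g. g)"
  by (simp add: continuous_map_id[unfolded id_def])

lemma sp_cont: "continuous_map (Sigma_top k) X sp"
  unfolding sp_def Delta_top_def by (simp add: continuous_map_paired id_cont xp_cont)
lemma sm_cont: "continuous_map (Sigma_top k) X sm"
  unfolding sm_def Delta_top_def by (simp add: continuous_map_paired id_cont xm_cont)

lemma sp_section: "continuous_section k sp"
  unfolding continuous_section_def using sp_cont by (simp add: sp_def)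
lemma sm_section: "continuous_section k sm"
  unfolding continuous_section_def using sm_cont by (simp add: sm_def)

lemma shift_image: "shift ` Sig = Sig"
proof
  show "shift ` Sig \<subseteq> Sig" using shift_Sig by blast
  show "Sig \<subseteq> shift ` Sig"
  proof
    fix g assume g: "g \<in> Sig"
    have "(\<lambda>i. g (i + (-1))) \<in> Sig" using transl_Sig[OF g] .
    moreover have "g = shift (\<lambda>i. g (i + (-1)))" by (simp add: shift_def)
    ultimately show "g \<in> shift ` Sig" by blast
  qed
qed

lemma sp_inv: "skew_invariant_section k f finv sp"
proof -
  have "T ` (sp ` Sig) = sp ` (shift ` Sig)"
    by (auto simp: image_image sp_def skew_eq xp_shift)
  thus ?thesis unfolding skew_invariant_section_def shift_image by simp
qed
lemma sm_inv: "skew_invariant_section k f finv sm"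
proof -
  have "T ` (sm ` Sig) = sm ` (shift ` Sig)"
    by (auto simp: image_image sm_def skew_eq xm_shift)
  thus ?thesis unfolding skew_invariant_section_def shift_image by simp
qed

lemma T_Kp: "T ` (sp ` Sig) = sp ` Sig"
  using sp_inv unfolding skew_invariant_section_def .

lemma xp_xm_ne: "g \<in> Sig \<Longrightarrow> xp g \<noteq> xm g"
proof -
  assume g: "g \<in> Sig"
  have a: "g (-1) \<noteq> letter_inv (g (-1 + 1))" by (rule Sig_red'[OF g])
  have "g (-1) \<noteq> letter_inv (g 0)" using a by simp
  moreover have "fst (g (-1)) < k" "fst (letter_inv (g 0)) < k" using Sig_fst[OF g] by auto
  ultimately have "Img (g (-1)) \<inter> Img (letter_inv (g 0)) = {}" by (rule Img_disj[rotated 2])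
  moreover have "xp g \<in> Img (g (-1))" by (rule xp_Img[OF g])
  moreover have "xm g \<in> Img (letter_inv (g 0))" by (rule xm_Img[OF g])
  ultimately show ?thesis by (metis disjoint_iff)
qed

lemma disjoint_K: "sp ` Sig \<inter> sm ` Sig = {}"
proof -
  have "sp g \<noteq> sm h" if "g \<in> Sig" "h \<in> Sig" for g h
    using xp_xm_ne[OF that(1)] by (auto simp: sp_def sm_def)
  thus ?thesis by blast
qed

lemma Kp_compact: "compactin X (sp ` Sig)"
  by (rule image_compactin[OF Sig_compact sp_cont])

definition U0 :: "((int \<Rightarrow> letter) \<times> 'a) set" where
  "U0 = {p \<in> Sig \<times> UNIV. snd p \<notin> Img (letter_inv (fst p 0))}"
definition U1 :: "((int \<Rightarrow> letter) \<times> 'a) set" where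
  "U1 = {p \<in> Sig \<times> UNIV. snd p \<in> closure (Dom (fst p 0))}"

lemma cyl0_open: "openin (Sigma_top k) {h \<in> Sig. \<forall>i\<in>{0}. h i = g i}"
  by (rule cyl_open) simp

lemma U0_open: "openin X U0"
proof -
  let ?C = "\<lambda>g. {h \<in> Sig. \<forall>i\<in>{0}. h i = g i} \<times> (UNIV - Img (letter_inv (g 0)))"
  have "U0 = \<Union>(?C ` Sig)"
  proof
    show "U0 \<subseteq> \<Union>(?C ` Sig)"
    proof
      fix p assume p: "p \<in> U0"
      hence "fst p \<in> Sig" "snd p \<notin> Img (letter_inv (fst p 0))" unfolding U0_def by auto
      hence "p \<in> ?C (fst p)" by (cases p) simp
      thus "p \<in> \<Union>(?C ` Sig)" using \<open>fst p \<in> Sig\<close> by blast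
    qed
    show "\<Union>(?C ` Sig) \<subseteq> U0"
    proof
      fix p assume "p \<in> \<Union>(?C ` Sig)"
      then obtain g where "g \<in> Sig" "p \<in> ?C g" by blast
      thus "p \<in> U0" unfolding U0_def by (cases p) simp
    qed
  qed
  moreover have "openin X (?C g)" if g: "g \<in> Sig" for g
  proof -
    have "fst (letter_inv (g 0)) < k" using Sig_fst[OF g] by simp
    hence "open (UNIV - Img (letter_inv (g 0)))"
      by (intro open_Diff open_UNIV compact_imp_closed Img_compact)
    hence o: "openin euclidean (UNIV - Img (letter_inv (g 0)))" by (simp only: open_openin)
    show ?thesis unfolding Delta_top_def openin_prod_Times_iff by (intro disjI2 conjI cyl0_open o)
  qed
  ultimately show ?thesis by (metis (no_types, lifting) imageE openin_Union)
qed

lemma U1_closed: "closedin X U1"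
proof -
  let ?C = "\<lambda>g. {h \<in> Sig. \<forall>i\<in>{0}. h i = g i} \<times> (- closure (Dom (g 0)))"
  have "topspace X - U1 = \<Union>(?C ` Sig)"
  proof
    show "topspace X - U1 \<subseteq> \<Union>(?C ` Sig)"
    proof
      fix p assume p: "p \<in> topspace X - U1"
      hence "fst p \<in> Sig" "snd p \<notin> closure (Dom (fst p 0))" unfolding U1_def topspace_Delta by auto
      hence "p \<in> ?C (fst p)" by (cases p) simp
      thus "p \<in> \<Union>(?C ` Sig)" using \<open>fst p \<in> Sig\<close> by blast
    qed
    show "\<Union>(?C ` Sig) \<subseteq> topspace X - U1"
    proof
      fix p assume "p \<in> \<Union>(?C ` Sig)"
      then obtain g where "g \<in> Sig" "p \<in> ?C g" by blast
      thus "p \<in> topspace X - U1" unfolding U1_def topspace_Delta by (cases p) simp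
    qed
  qed
  moreover have "openin X (?C g)" for g
  proof -
    have "open (- closure (Dom (g 0)))" by auto
    hence o: "openin euclidean (- closure (Dom (g 0)))" by (simp only: open_openin)
    show ?thesis unfolding Delta_top_def openin_prod_Times_iff by (intro disjI2 conjI cyl0_open o)
  qed
  ultimately have "openin X (topspace X - U1)" by (metis (no_types, lifting) imageE openin_Union)
  moreover have "U1 \<subseteq> topspace X" unfolding U1_def topspace_Delta by auto
  ultimately show ?thesis unfolding closedin_def by simp
qed

lemma U0_U1: "U0 \<subseteq> U1"
  unfolding U0_def U1_def Dom_def using closure_subset by fastforce

lemma closure_U0: "X closure_of U0 \<subseteq> U1"
  by (rule closure_of_minimal[OF U0_U1 U1_closed])

lemma T_U1: "T ` U1 \<subseteq> U0"
proof
  fix q assume "q \<in> T ` U1"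
  then obtain g x where gx: "g \<in> Sig" "x \<in> closure (Dom (g 0))" "q = T (g, x)" unfolding U1_def by auto
  have l: "fst (g 0) < k" using Sig_fst[OF gx(1)] .
  have "act (g 0) ` closure (Dom (g 0)) \<subseteq> Img (g 0)"
    by (rule image_closure_subset[OF continuous_on_subset[OF act_cont[OF l]]])
       (auto simp: compact_imp_closed Img_compact l act_Dom)
  hence a: "act (g 0) x \<in> Img (g 0)" using gx(2) by blast
  have "g 0 \<noteq> letter_inv (g 1)" using Sig_red'[OF gx(1), of 0] by simp
  moreover have "fst (letter_inv (g 1)) < k" using Sig_fst[OF gx(1)] by auto
  ultimately have "Img (g 0) \<inter> Img (letter_inv (g 1)) = {}" using Img_disj l by blast
  hence "act (g 0) x \<notin> Img (letter_inv (shift g 0))" using a by (auto simp: shift_def)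
  thus "q \<in> U0" unfolding U0_def using gx shift_Sig by (simp add: skew_eq)
qed

lemma Kp_U0: "sp ` Sig \<subseteq> U0"
proof
  fix p assume "p \<in> sp ` Sig"
  then obtain g where g: "g \<in> Sig" "p = sp g" by blast
  have "g (-1) \<noteq> letter_inv (g 0)" using Sig_red'[OF g(1), of "-1"] by simp
  moreover have "fst (g (-1)) < k" "fst (letter_inv (g 0)) < k" using Sig_fst[OF g(1)] by auto
  ultimately have "Img (g (-1)) \<inter> Img (letter_inv (g 0)) = {}" using Img_disj by blast
  thus "p \<in> U0" using xp_Img[OF g(1)] g unfolding U0_def sp_def by auto
qed

lemma Km_U0: "sm ` Sig \<inter> U0 = {}"
  using xm_Img unfolding U0_def sm_def by auto

lemma Kp_Inter: "sp ` Sig = (\<Inter>n. (T ^^ n) ` U0)"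
proof
  show "sp ` Sig \<subseteq> (\<Inter>n. (T ^^ n) ` U0)"
  proof (intro subsetI INT_I)
    fix p n assume "p \<in> sp ` Sig"
    then obtain g where g: "g \<in> Sig" "p = sp g" by blast
    define g' where "g' = (\<lambda>i. g (i + (- int n)))"
    have g': "g' \<in> Sig" unfolding g'_def by (rule transl_Sig[OF g(1)])
    have sg: "shiftn g' n = g" by (simp add: g'_def shiftn_def)
    have "(T ^^ n) (sp g') = (g, comp g' (int n) n (xp g'))" by (simp add: skew_pow sp_def sg)
    also have "comp g' (int n) n (xp g') = xp g" using inv_iter[of xp g' n] xp_shift g' sg by simp
    finally have "(T ^^ n) (sp g') = p" using g by (simp add: sp_def)
    moreover have "sp g' \<in> U0" using Kp_U0 g' by blast
    ultimately show "p \<in> (T ^^ n) ` U0" by blast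
  qed
next
  show "(\<Inter>n. (T ^^ n) ` U0) \<subseteq> sp ` Sig"
  proof
    fix p assume p: "p \<in> (\<Inter>n. (T ^^ n) ` U0)"
    have hs: "fst p \<in> Sig"
    proof -
      obtain q where q: "q \<in> U0" "p = (T ^^ 1) q" using p by blast
      have "fst ((T ^^ 1) q) = shiftn (fst q) 1" by (subst skew_pow) simp
      thus ?thesis using q shiftn_Sig unfolding U0_def by auto
    qed
    have "\<forall>m. snd p \<in> W (fst p) m"
    proof
      fix m
      obtain q where q: "q \<in> U0" "p = (T ^^ Suc m) q" using p by blast
      obtain g x where gx: "q = (g, x)" by force
      have g: "g \<in> Sig" and x: "x \<in> Dom (g 0)" using q(1) gx unfolding U0_def Dom_def by auto
      have pq: "p = (shiftn g (Suc m), comp g (int (Suc m)) (Suc m) x)"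
        using q(2) skew_pow[of "Suc m" q] gx by (simp only: fst_conv snd_conv)
      have p1: "fst p = shiftn g (Suc m)" and p2: "snd p = comp g (int (Suc m)) (Suc m) x"
        using pq by simp_all
      have "comp g (int (Suc m)) (Suc m) x = comp g (int (Suc m)) m (act (g 0) x)" by simp
      also have "\<dots> = comp (shiftn g (Suc m)) 0 m (act (g 0) x)"
        unfolding shiftn_def comp_shift by simp
      finally have e: "snd p = comp (fst p) 0 m (act (g 0) x)" using p1 p2 by simp
      have "act (g 0) x \<in> Img (g 0)" using act_Dom[OF Sig_fst[OF g] x] .
      moreover have "fst p (- int m - 1) = g 0" using p1 by (simp add: shiftn_def)
      ultimately show "snd p \<in> W (fst p) m" unfolding W_def e by simp
    qed
    hence "snd p = xp (fst p)" using xp_unique[OF hs] by simp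
    hence "p = sp (fst p)" by (simp add: sp_def prod_eq_iff)
    thus "p \<in> sp ` Sig" using hs by blast
  qed
qed

lemma attractor: "topological_attractor X T (sp ` Sig)"
  unfolding topological_attractor_def
proof (intro conjI exI[of _ U0])
  show "compactin X (sp ` Sig)" by (rule Kp_compact)
  show "T ` sp ` Sig = sp ` Sig" by (rule T_Kp)
  show "openin X U0" by (rule U0_open)
  show "sp ` Sig \<subseteq> U0" by (rule Kp_U0)
  show "T ` (X closure_of U0) \<subseteq> U0" using closure_U0 T_U1 by blast
  show "sp ` Sig = (\<Inter>n. (T ^^ n) ` U0)" by (rule Kp_Inter)
qed

end

context pp begin

lemma tube:
  assumes V: "openin X V" and KV: "sp ` Sig \<subseteq> V"
  shows "\<exists>r>0. \<forall>h\<in>Sig. \<forall>z. dist z (xp h) < r \<longrightarrow> (h, z) \<in> V"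
proof -
  have loc: "\<forall>h\<in>Sig. \<exists>c. fst c > (0::real) \<and> openin (Sigma_top k) (snd c) \<and> h \<in> snd c \<and>
      (\<forall>h'\<in>snd c. \<forall>z. dist z (xp h') < fst c \<longrightarrow> (h', z) \<in> V)"
  proof
    fix h assume h: "h \<in> Sig"
    have hV: "(h, xp h) \<in> V" using KV h by (auto simp: sp_def)
    have V': "openin (prod_topology (Sigma_top k) euclidean) V" using V by (simp add: Delta_top_def)
    obtain U1 Ov where UO: "openin (Sigma_top k) U1" "openin euclidean Ov" "h \<in> U1" "xp h \<in> Ov" "U1 \<times> Ov \<subseteq> V"
      using mp[OF spec[OF spec[OF iffD1[OF openin_prod_topology_alt V']]] hV] by blast
    have "open Ov" using UO(2) by (simp only: open_openin)
    then obtain e where e: "e > 0" "ball (xp h) e \<subseteq> Ov" using UO(4) open_contains_ball by blast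
    have e2: "e/2 > 0" using e by simp
    obtain N::nat where N: "\<forall>h'\<in>Sig. (\<forall>i. \<bar>i\<bar> \<le> int N \<longrightarrow> h' i = h i) \<longrightarrow> dist (xp h') (xp h) < e/2"
      using cont_local[OF xp_cont h e2] by blast
    define G where "G = U1 \<inter> {h' \<in> Sig. \<forall>i\<in>{-int N..int N}. h' i = h i}"
    have "openin (Sigma_top k) G" unfolding G_def by (intro openin_Int UO(1) cyl_open) simp
    moreover have "h \<in> G" unfolding G_def using h UO(3) by simp
    moreover have "\<forall>h'\<in>G. \<forall>z. dist z (xp h') < e/2 \<longrightarrow> (h', z) \<in> V"
    proof (intro ballI allI impI)
      fix h' z assume h': "h' \<in> G" and z: "dist z (xp h') < e/2"
      have "h' \<in> Sig" "\<forall>i. \<bar>i\<bar> \<le> int N \<longrightarrow> h' i = h i" "h' \<in> U1" using h' unfolding G_def by (auto simp: abs_le_iff)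
      hence "dist (xp h') (xp h) < e/2" using N by blast
      hence "dist (xp h) z < e" using z dist_triangle[of z "xp h" "xp h'"] by (simp add: dist_commute)
      hence "z \<in> Ov" using e(2) by auto
      thus "(h', z) \<in> V" using \<open>h' \<in> U1\<close> UO(5) by blast
    qed
    ultimately show "\<exists>c. fst c > (0::real) \<and> openin (Sigma_top k) (snd c) \<and> h \<in> snd c \<and>
      (\<forall>h'\<in>snd c. \<forall>z. dist z (xp h') < fst c \<longrightarrow> (h', z) \<in> V)"
      using e2 by (intro exI[of _ "(e/2, G)"]) simp
  qed
  from bchoice[OF loc] obtain c where c: "\<forall>h\<in>Sig. fst (c h) > (0::real) \<and> openin (Sigma_top k) (snd (c h)) \<and> h \<in> snd (c h) \<and>
      (\<forall>h'\<in>snd (c h). \<forall>z. dist z (xp h') < fst (c h) \<longrightarrow> (h', z) \<in> V)" by blast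
  have "\<forall>U\<in>(\<lambda>h. snd (c h)) ` Sig. openin (Sigma_top k) U" using c by blast
  moreover have "Sig \<subseteq> \<Union>((\<lambda>h. snd (c h)) ` Sig)" using c by blast
  ultimately obtain F where F: "finite F" "F \<subseteq> (\<lambda>h. snd (c h)) ` Sig" "Sig \<subseteq> \<Union>F"
    using Sig_compact unfolding compactin_def by meson
  obtain H where H: "H \<subseteq> Sig" "finite H" "F = (\<lambda>h. snd (c h)) ` H"
    using finite_subset_image[OF F(1) F(2)] by blast
  have "H \<noteq> {}" using F(3) H(3) Sig_ne by auto
  define r where "r = Min ((\<lambda>h. fst (c h)) ` H)"
  have r0: "r > 0" unfolding r_def using H c \<open>H \<noteq> {}\<close> by (subst Min_gr_iff) auto
  have "\<forall>h\<in>Sig. \<forall>z. dist z (xp h) < r \<longrightarrow> (h, z) \<in> V"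
  proof (intro ballI allI impI)
    fix h z assume h: "h \<in> Sig" and z: "dist z (xp h) < r"
    obtain h0 where h0: "h0 \<in> H" "h \<in> snd (c h0)" using F(3) H(3) h by blast
    have "r \<le> fst (c h0)" unfolding r_def using H(2) h0(1) by simp
    thus "(h, z) \<in> V" using c h0 H(1) z by fastforce
  qed
  thus ?thesis using r0 by blast
qed

lemma basin_p: "basin X T (sp ` Sig) = topspace X - sm ` Sig"
proof
  show "basin X T (sp ` Sig) \<subseteq> topspace X - sm ` Sig"
  proof
    fix p assume p: "p \<in> basin X T (sp ` Sig)"
    hence pt: "p \<in> topspace X" and allV: "\<forall>V. openin X V \<and> sp ` Sig \<subseteq> V \<longrightarrow> eventually (\<lambda>n. (T ^^ n) p \<in> V) sequentially"
      unfolding basin_def by blast+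
    have ev: "eventually (\<lambda>n. (T ^^ n) p \<in> U0) sequentially"
      using allV[rule_format, OF conjI[OF U0_open Kp_U0]] .
    have "p \<notin> sm ` Sig"
    proof
      assume "p \<in> sm ` Sig"
      then obtain g where g: "g \<in> Sig" "p = sm g" by blast
      obtain N where N: "\<forall>n\<ge>N. (T ^^ n) p \<in> U0" using ev unfolding eventually_sequentially by blast
      have "(T ^^ N) p = (shiftn g N, comp g (int N) N (xm g))" using g by (simp add: skew_pow sm_def)
      also have "comp g (int N) N (xm g) = xm (shiftn g N)" using inv_iter[of xm g N] xm_shift g by metis
      finally have "(T ^^ N) p = sm (shiftn g N)" by (simp add: sm_def)
      hence "(T ^^ N) p \<in> sm ` Sig" using shiftn_Sig g by blast
      moreover have "(T ^^ N) p \<in> U0" using N by simp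
      ultimately show False using Km_U0 by blast
    qed
    thus "p \<in> topspace X - sm ` Sig" using pt by blast
  qed
next
  show "topspace X - sm ` Sig \<subseteq> basin X T (sp ` Sig)"
  proof
    fix p assume p: "p \<in> topspace X - sm ` Sig"
    obtain g x where gx: "p = (g, x)" by force
    have g: "g \<in> Sig" using p gx by (simp add: topspace_Delta)
    have "x \<noteq> xm g" using p gx g by (auto simp: sm_def)
    hence d: "dist x (xm g) > 0" by simp
    have "\<forall>V. openin X V \<and> sp ` Sig \<subseteq> V \<longrightarrow> eventually (\<lambda>n. (T ^^ n) p \<in> V) sequentially"
    proof (intro allI impI)
      fix V assume V: "openin X V \<and> sp ` Sig \<subseteq> V"
      obtain r where r: "r > 0" "\<forall>h\<in>Sig. \<forall>z. dist z (xp h) < r \<longrightarrow> (h, z) \<in> V" using tube[OF conjunct1[OF V] conjunct2[OF V]] by blast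
      obtain P where P: "\<forall>h\<in>Sig. \<forall>y. \<forall>p\<ge>P. dist x (xm g) \<le> dist y (xm h) \<longrightarrow> dist (comp h (int p) p y) (xp (shiftn h p)) < r"
        using UB[OF d r(1)] by blast
      have "\<forall>n\<ge>P. (T ^^ n) p \<in> V"
      proof (intro allI impI)
        fix n assume n: "P \<le> n"
        have "(T ^^ n) p = (shiftn g n, comp g (int n) n x)" using gx by (simp add: skew_pow)
        moreover have "dist (comp g (int n) n x) (xp (shiftn g n)) < r" using P[rule_format, OF g, of n x] n by simp
        ultimately show "(T ^^ n) p \<in> V" using r(2) shiftn_Sig[OF g] by simp
      qed
      thus "eventually (\<lambda>n. (T ^^ n) p \<in> V) sequentially" unfolding eventually_sequentially by blast
    qed
    moreover have "p \<in> topspace X" using p by blast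
    ultimately show "p \<in> basin X T (sp ` Sig)" unfolding basin_def by blast
  qed
qed

lemma letter_avoid: fixes a b :: letter shows "\<exists>c. fst c < k \<and> c \<noteq> a \<and> c \<noteq> b"
proof -
  have k0: "0 < k" "1 < k" using k1 by auto
  show ?thesis
  proof (cases "(0::nat, True) = a \<or> (0::nat, True) = b")
    case False thus ?thesis using k0 by (intro exI[of _ "(0, True)"]) simp
  next
    case F1: True
    show ?thesis
    proof (cases "(1::nat, True) = a \<or> (1::nat, True) = b")
      case False thus ?thesis using k0 by (intro exI[of _ "(1, True)"]) simp
    next
      case True
      hence "(0::nat, False) \<noteq> a \<and> (0::nat, False) \<noteq> b" using F1 by auto
      thus ?thesis using k0 by (intro exI[of _ "(0, False)"]) simp
    qed
  qed
qed

lemma glue: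
  assumes g1: "g1 \<in> Sig" and g2: "g2 \<in> Sig"
  shows "\<exists>h\<in>Sig. (\<forall>i. \<bar>i\<bar> \<le> int M \<longrightarrow> h i = g1 i) \<and> (\<forall>i. \<bar>i\<bar> \<le> int M \<longrightarrow> shiftn h (2*M+2) i = g2 i)"
proof -
  obtain c where c: "fst c < k" "c \<noteq> letter_inv (g1 (int M))" "c \<noteq> letter_inv (g2 (- int M))"
    using letter_avoid by blast
  define p where "p = int (2*M+2)"
  define h where "h i = (if i \<le> int M then g1 i else if i = int M + 1 then c else g2 (i - p))" for i
  have hf: "fst (h i) < k" for i unfolding h_def using c(1) Sig_fst[OF g1] Sig_fst[OF g2] by simp
  have hr: "h (i+1) \<noteq> letter_inv (h i)" for i
  proof -
    consider "i < int M" | "i = int M" | "i = int M + 1" | "i > int M + 1" by linarith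
    thus ?thesis
    proof cases
      case 1
      have "h (i+1) = g1 (i+1)" "h i = g1 i" unfolding h_def using 1 by simp_all
      thus ?thesis using Sig_red[OF g1, of i] by simp
    next
      case 2 thus ?thesis unfolding h_def using c(2) by (simp add: linv_eq_iff)
    next
      case 3
      have "h (i+1) = g2 (- int M)" unfolding h_def p_def using 3 by simp
      moreover have "h i = c" unfolding h_def using 3 by simp
      ultimately show ?thesis using c(3) by (metis linv_linv)
    next
      case 4
      have "h (i+1) = g2 ((i - p) + 1)" unfolding h_def using 4 by (simp add: algebra_simps)
      moreover have "h i = g2 (i - p)" unfolding h_def using 4 by simp
      ultimately show ?thesis using Sig_red[OF g2, of "i - p"] by simp
    qed
  qed
  have hS: "h \<in> Sig" using hf hr by (simp add: Sigma_words_def)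
  have a1: "\<forall>i. \<bar>i\<bar> \<le> int M \<longrightarrow> h i = g1 i" unfolding h_def by (simp add: abs_le_iff)
  have a2: "\<forall>i. \<bar>i\<bar> \<le> int M \<longrightarrow> shiftn h (2*M+2) i = g2 i"
  proof (intro allI impI)
    fix i :: int assume i: "\<bar>i\<bar> \<le> int M"
    have "\<not> (i + p \<le> int M)" "i + p \<noteq> int M + 1" using i unfolding p_def by (simp_all add: abs_le_iff)
    hence "h (i + p) = g2 i" unfolding h_def by simp
    thus "shiftn h (2*M+2) i = g2 i" unfolding shiftn_def p_def by simp
  qed
  show ?thesis using hS a1 a2 by blast
qed

end

lemma dist_tri3: "dist (a::'b::metric_space) d \<le> dist a b + dist b c + dist c d"
  using dist_triangle[of a d b] dist_triangle[of b d c] by linarith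

context pp begin

lemma uniq:
  assumes cs: "continuous_section k s" and inv: "skew_invariant_section k f finv s"
  shows "(\<forall>g\<in>Sig. s g = sp g) \<or> (\<forall>g\<in>Sig. s g = sm g)"
proof -
  define y where "y = snd \<circ> s"
  have sc: "continuous_map (Sigma_top k) X s" and sf: "\<forall>g\<in>Sig. fst (s g) = g"
    using cs unfolding continuous_section_def by auto
  have yc: "continuous_map (Sigma_top k) euclidean y"
    unfolding y_def by (rule continuous_map_compose[OF sc]) (simp add: Delta_top_def continuous_map_snd)
  have sg: "s g = (g, y g)" if "g \<in> Sig" for g using sf that by (simp add: y_def prod_eq_iff)
  have yinv: "\<forall>g\<in>Sig. y (shift g) = act (g 0) (y g)"
  proof
    fix g assume g: "g \<in> Sig"
    have "T (s g) \<in> s ` Sig" using inv g unfolding skew_invariant_section_def by blast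
    then obtain g' where g': "g' \<in> Sig" "T (s g) = s g'" by blast
    hence "(shift g, act (g 0) (y g)) = (g', y g')" using sg[OF g] sg[OF g'(1)] by (simp add: skew_eq)
    thus "y (shift g) = act (g 0) (y g)" by simp
  qed
  have yiter: "y (shiftn g n) = comp g (int n) n (y g)" if "g \<in> Sig" for g n
    using inv_iter[OF yinv that] .
  have xpiter: "xp (shiftn g n) = comp g (int n) n (xp g)" if "g \<in> Sig" for g n
  proof -
    have "\<forall>g\<in>Sig. xp (shift g) = act (g 0) (xp g)" using xp_shift by blast
    thus ?thesis using inv_iter that by blast
  qed
  have step1: "y g = xp g \<or> y g = xm g" if g: "g \<in> Sig" for g
  proof (rule ccontr)
    assume "\<not> (y g = xp g \<or> y g = xm g)"
    hence d1: "dist (y g) (xp g) > 0" and d2: "dist (y g) (xm g) > 0" by auto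
    define d where "d = min (dist (y g) (xp g)) (dist (y g) (xm g))"
    have d: "d > 0" using d1 d2 by (simp add: d_def)
    have d4: "d/4 > 0" using d by simp
    have d2': "d/2 > 0" using d by simp
    obtain N1::nat where N1: "\<forall>h\<in>Sig. (\<forall>i. \<bar>i\<bar> \<le> int N1 \<longrightarrow> h i = g i) \<longrightarrow> dist (y h) (y g) < d/4"
      using cont_local[OF yc g d4] by blast
    obtain N2::nat where N2: "\<forall>h\<in>Sig. (\<forall>i. \<bar>i\<bar> \<le> int N2 \<longrightarrow> h i = g i) \<longrightarrow> dist (xp h) (xp g) < d/4"
      using cont_local[OF xp_cont g d4] by blast
    obtain N3::nat where N3: "\<forall>h\<in>Sig. (\<forall>i. \<bar>i\<bar> \<le> int N3 \<longrightarrow> h i = g i) \<longrightarrow> dist (xm h) (xm g) < d/4"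
      using cont_local[OF xm_cont g d4] by blast
    obtain P where P: "\<forall>h\<in>Sig. \<forall>z. \<forall>p\<ge>P. d/2 \<le> dist z (xm h) \<longrightarrow> dist (comp h (int p) p z) (xp (shiftn h p)) < d/4"
      using UB[OF d2' d4] by blast
    define M where "M = max N1 (max N2 (max N3 P))"
    obtain h where h: "h \<in> Sig" "\<forall>i. \<bar>i\<bar> \<le> int M \<longrightarrow> h i = g i" "\<forall>i. \<bar>i\<bar> \<le> int M \<longrightarrow> shiftn h (2*M+2) i = g i"
      using glue[OF g g] by blast
    define p where "p = 2*M+2"
    define h' where "h' = shiftn h p"
    have h': "h' \<in> Sig" unfolding h'_def using shiftn_Sig[OF h(1)] .
    have ag: "\<forall>i. \<bar>i\<bar> \<le> int N \<longrightarrow> h i = g i" if "N \<le> M" for N using h(2) that by auto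
    have ag': "\<forall>i. \<bar>i\<bar> \<le> int N \<longrightarrow> h' i = g i" if "N \<le> M" for N using h(3) that unfolding h'_def p_def by auto
    have "dist (y h) (y g) < d/4" using N1 h(1) ag[of N1] by (simp add: M_def)
    moreover have "dist (xm h) (xm g) < d/4" using N3 h(1) ag[of N3] by (simp add: M_def)
    moreover have "dist (y h') (y g) < d/4" using N1 h' ag'[of N1] by (simp add: M_def)
    moreover have "dist (xp h') (xp g) < d/4" using N2 h' ag'[of N2] by (simp add: M_def)
    moreover have "d \<le> dist (y g) (xm g)" "d \<le> dist (y g) (xp g)" by (simp_all add: d_def)
    moreover have "dist (y g) (xm g) \<le> dist (y g) (y h) + dist (y h) (xm h) + dist (xm h) (xm g)" by (rule dist_tri3)
    ultimately have "d/2 \<le> dist (y h) (xm h)" by (simp add: dist_commute)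
    moreover have "P \<le> p" unfolding p_def M_def by simp
    ultimately have "dist (comp h (int p) p (y h)) (xp h') < d/4" using P[rule_format, OF h(1), of p "y h"] unfolding h'_def by simp
    hence "dist (y h') (xp h') < d/4" unfolding h'_def using yiter[OF h(1)] by simp
    moreover have "dist (y g) (xp g) \<le> dist (y g) (y h') + dist (y h') (xp h') + dist (xp h') (xp g)" by (rule dist_tri3)
    ultimately show False using \<open>dist (y h') (y g) < d/4\<close> \<open>dist (xp h') (xp g) < d/4\<close> \<open>d \<le> dist (y g) (xp g)\<close> d
      by (simp add: dist_commute)
  qed
  have "(\<forall>g\<in>Sig. y g = xp g) \<or> (\<forall>g\<in>Sig. y g = xm g)"
  proof (rule ccontr)
    assume "\<not> ?thesis"
    then obtain g1 g2 where g1: "g1 \<in> Sig" "y g1 \<noteq> xp g1" and g2: "g2 \<in> Sig" "y g2 \<noteq> xm g2" by blast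
    have y1: "y g1 = xm g1" using step1[OF g1(1)] g1(2) by blast
    have y2: "y g2 = xp g2" using step1[OF g2(1)] g2(2) by blast
    define e1 where "e1 = dist (y g1) (xp g1) / 3"
    define e2 where "e2 = dist (y g2) (xm g2) / 3"
    have e1: "e1 > 0" unfolding e1_def using g1(2) by simp
    have e2: "e2 > 0" unfolding e2_def using g2(2) by simp
    obtain N1::nat where N1: "\<forall>h\<in>Sig. (\<forall>i. \<bar>i\<bar> \<le> int N1 \<longrightarrow> h i = g1 i) \<longrightarrow> dist (y h) (y g1) < e1"
      using cont_local[OF yc g1(1) e1] by blast
    obtain N2::nat where N2: "\<forall>h\<in>Sig. (\<forall>i. \<bar>i\<bar> \<le> int N2 \<longrightarrow> h i = g1 i) \<longrightarrow> dist (xp h) (xp g1) < e1"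
      using cont_local[OF xp_cont g1(1) e1] by blast
    obtain N3::nat where N3: "\<forall>h\<in>Sig. (\<forall>i. \<bar>i\<bar> \<le> int N3 \<longrightarrow> h i = g2 i) \<longrightarrow> dist (y h) (y g2) < e2"
      using cont_local[OF yc g2(1) e2] by blast
    obtain N4::nat where N4: "\<forall>h\<in>Sig. (\<forall>i. \<bar>i\<bar> \<le> int N4 \<longrightarrow> h i = g2 i) \<longrightarrow> dist (xm h) (xm g2) < e2"
      using cont_local[OF xm_cont g2(1) e2] by blast
    define M where "M = max N1 (max N2 (max N3 N4))"
    obtain h where h: "h \<in> Sig" "\<forall>i. \<bar>i\<bar> \<le> int M \<longrightarrow> h i = g1 i" "\<forall>i. \<bar>i\<bar> \<le> int M \<longrightarrow> shiftn h (2*M+2) i = g2 i"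
      using glue[OF g1(1) g2(1)] by blast
    define p where "p = 2*M+2"
    define h' where "h' = shiftn h p"
    have h': "h' \<in> Sig" unfolding h'_def using shiftn_Sig[OF h(1)] .
    have ag: "\<forall>i. \<bar>i\<bar> \<le> int N \<longrightarrow> h i = g1 i" if "N \<le> M" for N using h(2) that by auto
    have ag': "\<forall>i. \<bar>i\<bar> \<le> int N \<longrightarrow> h' i = g2 i" if "N \<le> M" for N using h(3) that unfolding h'_def p_def by auto
    have a1: "dist (y h) (y g1) < e1" using N1 h(1) ag[of N1] by (simp add: M_def)
    have a2: "dist (xp h) (xp g1) < e1" using N2 h(1) ag[of N2] by (simp add: M_def)
    have a3: "dist (y h') (y g2) < e2" using N3 h' ag'[of N3] by (simp add: M_def)
    have a4: "dist (xm h') (xm g2) < e2" using N4 h' ag'[of N4] by (simp add: M_def)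
    have "y h \<noteq> xp h"
    proof
      assume "y h = xp h"
      moreover have "dist (y g1) (xp g1) \<le> dist (y g1) (y h) + dist (y h) (xp h) + dist (xp h) (xp g1)" by (rule dist_tri3)
      ultimately show False using a1 a2 e1 unfolding e1_def by (simp add: dist_commute)
    qed
    have "y h' \<noteq> xm h'"
    proof
      assume "y h' = xm h'"
      moreover have "dist (y g2) (xm g2) \<le> dist (y g2) (y h') + dist (y h') (xm h') + dist (xm h') (xm g2)" by (rule dist_tri3)
      ultimately show False using a3 a4 e2 unfolding e2_def by (simp add: dist_commute)
    qed
    hence "y h' = xp h'" using step1[OF h'] by blast
    hence "comp h (int p) p (y h) = comp h (int p) p (xp h)"
      unfolding h'_def using yiter[OF h(1)] xpiter[OF h(1)] by simp
    hence "y h = xp h" using comp_inj[OF h(1)] by blast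
    thus False using \<open>y h \<noteq> xp h\<close> by blast
  qed
  thus ?thesis using sg by (auto simp: sp_def sm_def)
qed

end

lemma attractor_transfer:
  fixes X :: "'b topology"
  assumes Pc: "continuous_map X X P" and Pi: "\<forall>p\<in>topspace X. P (P p) = p"
    and TX: "\<forall>p\<in>topspace X. T p \<in> topspace X"
    and cj: "\<forall>p\<in>topspace X. S p = P (T (P p))"
  shows attractor_transfer_att: "topological_attractor X T K \<Longrightarrow> topological_attractor X S (P ` K)"
    and attractor_transfer_basin: "K \<subseteq> topspace X \<Longrightarrow> basin X S (P ` K) = P ` basin X T K"
proof -
  have PX: "\<forall>p\<in>topspace X. P p \<in> topspace X" using continuous_map_image_subset_topspace[OF Pc] by blast
  have Titer: "(T ^^ n) p \<in> topspace X" if "p \<in> topspace X" for n p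
    using that TX by (induction n) auto
  have iter: "(S ^^ n) p = P ((T ^^ n) (P p))" if "p \<in> topspace X" for n p
  proof (induction n)
    case 0 thus ?case using Pi that by simp
  next
    case (Suc n)
    have tp: "(T ^^ n) (P p) \<in> topspace X" using Titer PX that by blast
    have "(S ^^ Suc n) p = S (P ((T ^^ n) (P p)))" using Suc by simp
    also have "\<dots> = P (T (P (P ((T ^^ n) (P p)))))" using cj PX tp by blast
    also have "\<dots> = P (T ((T ^^ n) (P p)))" using Pi tp by simp
    finally show ?case by simp
  qed
  have pre: "P ` A = {p \<in> topspace X. P p \<in> A}" if "A \<subseteq> topspace X" for A
  proof
    show "P ` A \<subseteq> {p \<in> topspace X. P p \<in> A}" using that PX Pi by auto
    show "{p \<in> topspace X. P p \<in> A} \<subseteq> P ` A"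
    proof
      fix p assume "p \<in> {p \<in> topspace X. P p \<in> A}"
      hence "p = P (P p)" "P p \<in> A" using Pi by auto
      thus "p \<in> P ` A" by blast
    qed
  qed
  have inj: "inj_on P (topspace X)" by (metis Pi inj_on_def)
  show "topological_attractor X S (P ` K)" if att: "topological_attractor X T K"
  proof -
    obtain U where cK: "compactin X K" and TK: "T ` K = K" and U: "openin X U" "K \<subseteq> U"
        "T ` (X closure_of U) \<subseteq> U" "K = (\<Inter>n. (T ^^ n) ` U)"
      using att unfolding topological_attractor_def by blast
    have Kt: "K \<subseteq> topspace X" using compactin_subset_topspace[OF cK] .
    have Ut: "U \<subseteq> topspace X" using openin_subset[OF U(1)] .
    have SP: "S (P q) = P (T q)" if "q \<in> topspace X" for q using cj PX Pi that by simp
    have "compactin X (P ` K)" by (rule image_compactin[OF cK Pc])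
    moreover have "S ` P ` K = P ` K"
    proof -
      have "S ` P ` K = P ` T ` K" using SP Kt by (auto simp: image_image intro!: image_cong)
      thus ?thesis using TK by simp
    qed
    moreover have "openin X (P ` U)" unfolding pre[OF Ut] by (rule openin_continuous_map_preimage[OF Pc U(1)])
    moreover have "P ` K \<subseteq> P ` U" using U(2) by blast
    moreover have "S ` (X closure_of (P ` U)) \<subseteq> P ` U"
    proof
      fix q assume "q \<in> S ` (X closure_of (P ` U))"
      then obtain p where p: "p \<in> X closure_of (P ` U)" "q = S p" by blast
      have "p \<in> {x \<in> topspace X. P x \<in> X closure_of U}"
        using continuous_map_closure_preimage_subset[OF Pc, of U] p(1) unfolding pre[OF Ut] by blast
      hence "p \<in> topspace X" "P p \<in> X closure_of U" by auto
      hence "T (P p) \<in> U" using U(3) by blast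
      thus "q \<in> P ` U" using p(2) cj \<open>p \<in> topspace X\<close> by auto
    qed
    moreover have "P ` K = (\<Inter>n. (S ^^ n) ` P ` U)"
    proof -
      have e: "(S ^^ n) ` P ` U = P ` (T ^^ n) ` U" for n
      proof -
        have "(S ^^ n) (P q) = P ((T ^^ n) q)" if "q \<in> U" for q
          using iter[of "P q" n] PX Pi Ut that by auto
        thus ?thesis by (auto simp: image_image intro!: image_cong)
      qed
      have "P ` K = P ` (\<Inter>n. (T ^^ n) ` U)" using U(4) by simp
      also have "\<dots> = (\<Inter>n. P ` (T ^^ n) ` U)"
        by (rule image_INT[OF inj]) (use Titer Ut in auto)
      finally show ?thesis using e by simp
    qed
    ultimately show ?thesis unfolding topological_attractor_def by blast
  qed
  show "basin X S (P ` K) = P ` basin X T K" if Kt: "K \<subseteq> topspace X"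
  proof -
    have key: "p \<in> basin X S (P ` K) \<longleftrightarrow> P p \<in> basin X T K" if pt: "p \<in> topspace X" for p
    proof
      assume b: "p \<in> basin X S (P ` K)"
      have "\<forall>V. openin X V \<and> K \<subseteq> V \<longrightarrow> eventually (\<lambda>n. (T ^^ n) (P p) \<in> V) sequentially"
      proof (intro allI impI)
        fix V assume V: "openin X V \<and> K \<subseteq> V"
        have Vt: "V \<subseteq> topspace X" using openin_subset V by blast
        have "openin X (P ` V)" unfolding pre[OF Vt] by (rule openin_continuous_map_preimage[OF Pc]) (use V in blast)
        moreover have "P ` K \<subseteq> P ` V" using V by blast
        ultimately have "eventually (\<lambda>n. (S ^^ n) p \<in> P ` V) sequentially" using b unfolding basin_def by blast
        thus "eventually (\<lambda>n. (T ^^ n) (P p) \<in> V) sequentially"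
        proof (rule eventually_mono)
          fix n assume "(S ^^ n) p \<in> P ` V"
          hence "P ((T ^^ n) (P p)) \<in> P ` V" using iter[OF pt] by simp
          moreover have "(T ^^ n) (P p) \<in> topspace X" using Titer PX pt by blast
          ultimately show "(T ^^ n) (P p) \<in> V" using inj Vt by (auto dest: inj_onD)
        qed
      qed
      moreover have "P p \<in> topspace X" using PX pt by blast
      ultimately show "P p \<in> basin X T K" unfolding basin_def by blast
    next
      assume b: "P p \<in> basin X T K"
      have "\<forall>V. openin X V \<and> P ` K \<subseteq> V \<longrightarrow> eventually (\<lambda>n. (S ^^ n) p \<in> V) sequentially"
      proof (intro allI impI)
        fix V assume V: "openin X V \<and> P ` K \<subseteq> V"
        have Vt: "V \<subseteq> topspace X" using openin_subset V by blast
        have "openin X (P ` V)" unfolding pre[OF Vt] by (rule openin_continuous_map_preimage[OF Pc]) (use V in blast)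
        moreover have "K \<subseteq> P ` V"
        proof
          fix q assume "q \<in> K"
          hence "q = P (P q)" "P q \<in> V" using Pi Kt V by auto
          thus "q \<in> P ` V" by blast
        qed
        ultimately have "eventually (\<lambda>n. (T ^^ n) (P p) \<in> P ` V) sequentially" using b unfolding basin_def by blast
        thus "eventually (\<lambda>n. (S ^^ n) p \<in> V) sequentially"
        proof (rule eventually_mono)
          fix n assume "(T ^^ n) (P p) \<in> P ` V"
          then obtain v where "v \<in> V" "(T ^^ n) (P p) = P v" by blast
          hence "P ((T ^^ n) (P p)) = v" using Pi Vt by auto
          thus "(S ^^ n) p \<in> V" using iter[OF pt] \<open>v \<in> V\<close> by simp
        qed
      qed
      thus "p \<in> basin X S (P ` K)" unfolding basin_def using pt by blast
    qed
    have bt: "basin X T K \<subseteq> topspace X" unfolding basin_def by blast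
    show ?thesis
    proof
      show "basin X S (P ` K) \<subseteq> P ` basin X T K"
      proof
        fix p assume p: "p \<in> basin X S (P ` K)"
        hence pt: "p \<in> topspace X" unfolding basin_def by blast
        hence "P p \<in> basin X T K" using key p by blast
        moreover have "p = P (P p)" using Pi pt by simp
        ultimately show "p \<in> P ` basin X T K" by blast
      qed
      show "P ` basin X T K \<subseteq> basin X S (P ` K)"
      proof
        fix p assume "p \<in> P ` basin X T K"
        then obtain q where q: "q \<in> basin X T K" "p = P q" by blast
        have qt: "q \<in> topspace X" using q bt by blast
        have "P p \<in> basin X T K" using q Pi qt by simp
        moreover have "p \<in> topspace X" using PX qt q by simp
        ultimately show "p \<in> basin X S (P ` K)" using key by blast
      qed
    qed
  qed
qed


context pp begin

lemma wrev_cont: "continuous_map (Sigma_top k) (Sigma_top k) wrev"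
proof -
  have "continuous_map PT PT wrev"
    unfolding continuous_map_componentwise_UNIV
  proof
    fix i :: int
    have "continuous_map PT (discrete_topology UNIV) (letter_inv \<circ> (\<lambda>g. g (-1 - i)))"
      by (rule continuous_map_compose[OF continuous_map_product_projection]) simp_all
    thus "continuous_map PT (discrete_topology UNIV) (\<lambda>x. wrev x i)" by (simp add: wrev_def o_def)
  qed
  hence "continuous_map (Sigma_top k) PT wrev" unfolding Sigma_top_def by (rule continuous_map_from_subtopology)
  moreover have "wrev \<in> topspace (Sigma_top k) \<rightarrow> Sig" using wrev_Sig by (auto simp: topspace_Sig)
  ultimately show ?thesis unfolding Sigma_top_def[of k] continuous_map_in_subtopology
    by (simp add: Sigma_top_def)
qed

definition phi :: "(int \<Rightarrow> letter) \<times> 'a \<Rightarrow> (int \<Rightarrow> letter) \<times> 'a" where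
  "phi p = (wrev (fst p), snd p)"

lemma phi_cont: "continuous_map X X phi"
proof -
  have "continuous_map (prod_topology (Sigma_top k) euclidean) (Sigma_top k) (wrev \<circ> fst)"
    by (rule continuous_map_compose[OF continuous_map_fst wrev_cont])
  moreover have "continuous_map (prod_topology (Sigma_top k) euclidean) (euclidean::'a topology) snd"
    by (rule continuous_map_snd)
  ultimately show ?thesis unfolding Delta_top_def phi_def
    by (simp add: continuous_map_paired o_def)
qed

lemma phi_inv: "phi (phi p) = p" by (simp add: phi_def)

lemma phi_top: "p \<in> topspace X \<Longrightarrow> phi p \<in> topspace X"
  by (auto simp: phi_def topspace_Delta wrev_Sig)

lemma T_top: "p \<in> topspace X \<Longrightarrow> T p \<in> topspace X"
  by (cases p) (auto simp: skew_eq topspace_Delta shift_Sig)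

lemma T_inj: "inj_on T (topspace X)"
proof (rule inj_onI)
  fix p q assume p: "p \<in> topspace X" and q: "q \<in> topspace X" and e: "T p = T q"
  obtain g x h y where gx: "p = (g, x)" "q = (h, y)" by force
  have s: "shift g = shift h" and a: "act (g 0) x = act (h 0) y" using e gx by (simp_all add: skew_eq)
  have gh: "g = h"
  proof
    fix i
    have "shift g (i - 1) = shift h (i - 1)" using s by simp
    thus "g i = h i" by (simp add: shift_def)
  qed
  have g: "g \<in> Sig" using p gx by (simp add: topspace_Delta)
  have "act (g 0) x = act (g 0) y" using a gh by simp
  hence "x = y" by (rule act_inj[OF Sig_fst[OF g]])
  thus "p = q" using gx gh by simp
qed

lemma wsw: "wrev (shift (wrev g)) = (\<lambda>i. g (i - 1))"
proof (rule ext)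
  fix i :: int
  have "wrev (shift (wrev g)) i = g (-1 - (-1 - i + 1))" by (simp only: wrev_def shift_def linv_linv)
  also have "\<dots> = g (i - 1)" by (rule arg_cong[where f=g]) simp
  finally show "wrev (shift (wrev g)) i = g (i - 1)" .
qed

lemma Tinv_eq: "p \<in> topspace X \<Longrightarrow> inv_into (topspace X) T p = phi (T (phi p))"
proof -
  assume p: "p \<in> topspace X"
  obtain g x where gx: "p = (g, x)" by force
  have g: "g \<in> Sig" using p gx by (simp add: topspace_Delta)
  have "T (phi (T (phi p))) = p"
  proof -
    have "phi (T (phi p)) = ((\<lambda>i. g (i - 1)), act (letter_inv (g (-1))) x)"
      using gx by (simp add: phi_def skew_eq wsw) (simp add: wrev_def)
    moreover have "shift (\<lambda>i. g (i - 1)) = g" by (simp add: shift_def)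
    ultimately show ?thesis using gx act_inv2 Sig_fst[OF g] by (simp add: skew_eq)
  qed
  thus ?thesis using inv_into_f_eq[OF T_inj] phi_top T_top p by metis
qed

lemma wrev_image: "wrev ` Sig = Sig"
proof
  show "wrev ` Sig \<subseteq> Sig" using wrev_Sig by blast
  show "Sig \<subseteq> wrev ` Sig"
  proof
    fix g assume "g \<in> Sig"
    hence "wrev g \<in> Sig" "g = wrev (wrev g)" using wrev_Sig by auto
    thus "g \<in> wrev ` Sig" by blast
  qed
qed

lemma phi_Kp: "phi ` sp ` Sig = sm ` Sig"
proof -
  have "phi ` sp ` Sig = sm ` wrev ` Sig"
    by (auto simp: image_image phi_def sp_def sm_def xm_def intro!: image_cong)
  thus ?thesis using wrev_image by simp
qed

lemma phi_Km: "phi ` sm ` Sig = sp ` Sig"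
proof -
  have "phi ` sm ` Sig = phi ` phi ` sp ` Sig" using phi_Kp by simp
  thus ?thesis by (simp add: image_image phi_inv)
qed

lemma repellor: "topological_repellor X T (sm ` Sig)"
  and basin_m: "basin X (inv_into (topspace X) T) (sm ` Sig) = topspace X - sp ` Sig"
proof -
  have cj: "\<forall>p\<in>topspace X. inv_into (topspace X) T p = phi (T (phi p))" using Tinv_eq by blast
  have Pi: "\<forall>p\<in>topspace X. phi (phi p) = p" using phi_inv by blast
  have TX: "\<forall>p\<in>topspace X. T p \<in> topspace X" using T_top by blast
  have "topological_attractor X (inv_into (topspace X) T) (phi ` sp ` Sig)"
    by (rule attractor_transfer_att[OF phi_cont Pi TX cj attractor])
  thus "topological_repellor X T (sm ` Sig)" unfolding topological_repellor_def phi_Kp .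
  have Kt: "sp ` Sig \<subseteq> topspace X" by (auto simp: sp_def topspace_Delta)
  have Kmt: "sm ` Sig \<subseteq> topspace X" by (auto simp: sm_def topspace_Delta)
  have "basin X (inv_into (topspace X) T) (phi ` sp ` Sig) = phi ` basin X T (sp ` Sig)"
    by (rule attractor_transfer_basin[OF phi_cont Pi TX cj Kt])
  also have "\<dots> = phi ` (topspace X - sm ` Sig)" using basin_p by simp
  also have "\<dots> = phi ` topspace X - phi ` sm ` Sig"
  proof -
    have "inj phi" by (metis injI phi_inv)
    thus ?thesis by (rule image_set_diff)
  qed
  also have "phi ` topspace X = topspace X"
  proof
    show "phi ` topspace X \<subseteq> topspace X" using phi_top by blast
    show "topspace X \<subseteq> phi ` topspace X"
    proof
      fix p assume "p \<in> topspace X"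
      thus "p \<in> phi ` topspace X" using phi_top phi_inv by (metis image_eqI)
    qed
  qed
  finally show "basin X (inv_into (topspace X) T) (sm ` Sig) = topspace X - sp ` Sig"
    unfolding phi_Kp phi_Km .
qed

end

theorem proposition6p4:
  fixes k :: nat
    and f finv :: "nat \<Rightarrow> 'a::metric_space \<Rightarrow> 'a"
  assumes "compact (UNIV :: 'a set)"
    and "k > 1"
    and "\<forall>i<k. homeomorphism UNIV UNIV (f i) (finv i)"
    and "compact_contracting_ping_pong k f finv"
  shows "\<exists>sp sm :: (int \<Rightarrow> letter) \<Rightarrow> (int \<Rightarrow> letter) \<times> 'a.
     continuous_section k sp \<and> skew_invariant_section k f finv sp \<and>
     continuous_section k sm \<and> skew_invariant_section k f finv sm \<and>
     (\<forall>s. continuous_section k s \<and> skew_invariant_section k f finv s \<longrightarrow>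
          (\<forall>g\<in>Sigma_words k. s g = sp g) \<or> (\<forall>g\<in>Sigma_words k. s g = sm g)) \<and>
     sp ` Sigma_words k \<inter> sm ` Sigma_words k = {} \<and>
     topological_attractor (Delta_top k) (skew f finv) (sp ` Sigma_words k) \<and>
     basin (Delta_top k) (skew f finv) (sp ` Sigma_words k)
       = topspace (Delta_top k) - sm ` Sigma_words k \<and>
     topological_repellor (Delta_top k) (skew f finv) (sm ` Sigma_words k) \<and>
     basin (Delta_top k) (inv_into (topspace (Delta_top k)) (skew f finv)) (sm ` Sigma_words k)
       = topspace (Delta_top k) - sp ` Sigma_words k"
proof -
  obtain A B :: "nat \<Rightarrow> 'a set" where AB:
        "(\<forall>i<k. compact (A i) \<and> compact (B i))"
        "(\<forall>i<k. \<forall>j<k. A i \<inter> B j = {})"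
        "(\<forall>i<k. \<forall>j<k. i \<noteq> j \<longrightarrow> A i \<inter> A j = {} \<and> B i \<inter> B j = {})"
        "(\<forall>i<k. f i ` (UNIV - A i) \<subseteq> B i)"
        "(\<forall>i<k. contraction_on (f i) (UNIV - A i))"
        "(\<forall>i<k. contraction_on (finv i) (UNIV - B i))"
    using assms(4) unfolding compact_contracting_ping_pong_def by (elim exE conjE) (rule that)
  interpret P: pp k f finv A B
    by (unfold_locales) (use assms(1-3) AB in auto)
  have u: "\<forall>s. continuous_section k s \<and> skew_invariant_section k f finv s \<longrightarrow>
          (\<forall>g\<in>Sigma_words k. s g = P.sp g) \<or> (\<forall>g\<in>Sigma_words k. s g = P.sm g)"
  proof (intro allI impI)
    fix s assume H: "continuous_section k s \<and> skew_invariant_section k f finv s"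
    show "(\<forall>g\<in>Sigma_words k. s g = P.sp g) \<or> (\<forall>g\<in>Sigma_words k. s g = P.sm g)"
      by (rule P.uniq[OF conjunct1[OF H] conjunct2[OF H]])
  qed
  show ?thesis
    apply (rule exI[of _ P.sp], rule exI[of _ P.sm])
    apply (intro conjI)
    apply (rule P.sp_section)
    apply (rule P.sp_inv)
    apply (rule P.sm_section)
    apply (rule P.sm_inv)
    apply (rule u)
    apply (rule P.disjoint_K)
    apply (rule P.attractor)
    apply (rule P.basin_p)
    apply (rule P.repellor)
    apply (rule P.basin_m)
    done
qed


end
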